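(* Let $p$ be the POP of size $3$ on $\{1,2,3\}$ whose only relation is $3<_p2$ (so $1$ is isolated), and let $p'$ be the POP of size $3$ whose only relation is $2<_{p'}3$. Then $p\sim_s p'$. Equivalently, the set of classical patterns $\{132,231,321\}$ is shape-Wilf-equivalent to the set $\{123,213,312\}$: for every Ferrers board $\lambda$, the number of transversals of $\lambda$ avoiding all of $132,231,321$ equals the number of transversals avoiding all of $123,213,312$.
   Context: A partially ordered pattern (POP) $p$ of size $m$ is a partial order $\le_p$ on $[m]$. A Ferrers board $\lambda=(\lambda_1\ge\dots\ge\lambda_n>0)$ with $\lambda_1=n$ is drawn in French notation: rows numbered $1,\dots,n$ from bottom to top, row $i$ consisting of cells $(i,1),\dots,(i,\lambda_i)$. A transversal of $\lambda$ is a $0/1$-filling of its cells with exactly one $1$ in each row and column. A transversal $T$ contains a POP $p$ of size $m$ if there are rows $r_1<\dots<r_m$ and columns $c_1<\dots<c_m$ such that every cell $(r_a,c_b)$ lies in $\lambda$ and the $1$ of column $c_b$ lies in row $r_{\sigma(b)}$ for each $b$ (so $\sigma\in\mathfrak S_m$), with $\sigma(j)<\sigma(j')$ whenever $j<_p j'$; $T$ contains a classical pattern $\alpha\in\mathfrak S_m$ if this holds with $\sigma=\alpha$. Otherwise $T$ avoids it. Two POPs (or sets of patterns) are shape-Wilf-equivalent, $\sim_s$, if for every Ferrers board the numbers of avoiding transversals coincide. *)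

theory Defs
  imports Main
begin

text \<open>A Ferrers board with n rows, given by row lengths lam 1, ..., lam n
  (French notation, rows numbered bottom to top), with
  lam 1 \<ge> ... \<ge> lam n > 0 and lam 1 = n.\<close>
definition ferrers :: "nat \<Rightarrow> (nat \<Rightarrow> nat) \<Rightarrow> bool" where
  "ferrers n lam \<longleftrightarrow> 0 < n \<and> lam 1 = n \<and>
     (\<forall>i\<in>{1..<n}. lam (Suc i) \<le> lam i) \<and> (\<forall>i\<in>{1..n}. 0 < lam i)"

definition cells :: "nat \<Rightarrow> (nat \<Rightarrow> nat) \<Rightarrow> (nat \<times> nat) set" where
  "cells n lam = {(i, j). i \<in> {1..n} \<and> j \<in> {1..lam i}}"

text \<open>A transversal: a 0/1-filling, represented by the set of cells containing a 1,
  with exactly one 1 in each row 1..n and each column 1..lam 1 = n.\<close>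
definition transversal :: "nat \<Rightarrow> (nat \<Rightarrow> nat) \<Rightarrow> (nat \<times> nat) set \<Rightarrow> bool" where
  "transversal n lam T \<longleftrightarrow> T \<subseteq> cells n lam \<and>
     (\<forall>i\<in>{1..n}. \<exists>!j. (i, j) \<in> T) \<and> (\<forall>j\<in>{1..lam 1}. \<exists>!i. (i, j) \<in> T)"

definition occurs_with ::
  "nat \<Rightarrow> (nat \<Rightarrow> nat) \<Rightarrow> (nat \<times> nat) set \<Rightarrow> nat \<Rightarrow> (nat \<Rightarrow> nat) \<Rightarrow> bool" where
  "occurs_with n lam T m \<sigma> \<longleftrightarrow>
     (\<exists>r c. strict_mono_on {1..m} r \<and> strict_mono_on {1..m} c \<and>
        (\<forall>a\<in>{1..m}. \<forall>b\<in>{1..m}. (r a, c b) \<in> cells n lam) \<and>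
        (\<forall>b\<in>{1..m}. (r (\<sigma> b), c b) \<in> T))"

text \<open>A POP of size m is given by its strict order relation rel j j' (meaning j <_p j').\<close>
definition contains_pop ::
  "nat \<Rightarrow> (nat \<Rightarrow> nat) \<Rightarrow> (nat \<times> nat) set \<Rightarrow> nat \<Rightarrow> (nat \<Rightarrow> nat \<Rightarrow> bool) \<Rightarrow> bool" where
  "contains_pop n lam T m rel \<longleftrightarrow>
     (\<exists>\<sigma>. bij_betw \<sigma> {1..m} {1..m} \<and> occurs_with n lam T m \<sigma> \<and>
        (\<forall>j\<in>{1..m}. \<forall>j'\<in>{1..m}. rel j j' \<longrightarrow> \<sigma> j < \<sigma> j'))"

text \<open>Classical pattern alpha in S_m, given as the list [alpha 1, ..., alpha m].\<close>
definition contains_perm ::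
  "nat \<Rightarrow> (nat \<Rightarrow> nat) \<Rightarrow> (nat \<times> nat) set \<Rightarrow> nat list \<Rightarrow> bool" where
  "contains_perm n lam T \<alpha> \<longleftrightarrow> occurs_with n lam T (length \<alpha>) (\<lambda>b. \<alpha> ! (b - 1))"

definition num_avoid_pop :: "nat \<Rightarrow> (nat \<Rightarrow> nat) \<Rightarrow> nat \<Rightarrow> (nat \<Rightarrow> nat \<Rightarrow> bool) \<Rightarrow> nat" where
  "num_avoid_pop n lam m rel =
     card {T. transversal n lam T \<and> \<not> contains_pop n lam T m rel}"

definition num_avoid_perms :: "nat \<Rightarrow> (nat \<Rightarrow> nat) \<Rightarrow> nat list set \<Rightarrow> nat" where
  "num_avoid_perms n lam S =
     card {T. transversal n lam T \<and> (\<forall>\<alpha>\<in>S. \<not> contains_perm n lam T \<alpha>)}"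

definition shape_wilf_pop :: "nat \<Rightarrow> (nat \<Rightarrow> nat \<Rightarrow> bool) \<Rightarrow> (nat \<Rightarrow> nat \<Rightarrow> bool) \<Rightarrow> bool" where
  "shape_wilf_pop m p q \<longleftrightarrow>
     (\<forall>n lam. ferrers n lam \<longrightarrow> num_avoid_pop n lam m p = num_avoid_pop n lam m q)"

definition shape_wilf_perms :: "nat list set \<Rightarrow> nat list set \<Rightarrow> bool" where
  "shape_wilf_perms S S' \<longleftrightarrow>
     (\<forall>n lam. ferrers n lam \<longrightarrow> num_avoid_perms n lam S = num_avoid_perms n lam S')"

end

theory Submission
  imports Defs
begin

definition ins :: "nat \<Rightarrow> nat \<Rightarrow> nat" where "ins r x = (if x < r then x else Suc x)"
definition del :: "nat \<Rightarrow> nat \<Rightarrow> nat" where "del r x = (if x < r then x else x - 1)"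
definition ext :: "nat \<Rightarrow> nat list \<Rightarrow> nat list" where "ext r xs = map (ins r) xs @ [r]"
definition shr :: "(nat \<Rightarrow> nat) \<Rightarrow> nat \<Rightarrow> nat \<Rightarrow> nat \<Rightarrow> nat" where
  "shr lam m r = (\<lambda>i. min (lam (ins r i)) m)"
definition tr :: "(nat \<Rightarrow> nat) \<Rightarrow> nat \<Rightarrow> nat list set" where
  "tr lam n = {R. length R = n \<and> distinct R \<and> set R = {1..n} \<and> (\<forall>i<n. i < lam (R!i))}"
definition occP :: "(nat \<Rightarrow> nat) \<Rightarrow> nat list \<Rightarrow> bool" where
  "occP lam R \<longleftrightarrow> (\<exists>i j l. i < j \<and> j < l \<and> l < length R \<and> R!l < R!j \<and>
      l < lam (R!i) \<and> l < lam (R!j) \<and> l < lam (R!l))"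
definition occQ :: "(nat \<Rightarrow> nat) \<Rightarrow> nat list \<Rightarrow> bool" where
  "occQ lam R \<longleftrightarrow> (\<exists>i j l. i < j \<and> j < l \<and> l < length R \<and> R!j < R!l \<and>
      l < lam (R!i) \<and> l < lam (R!j) \<and> l < lam (R!l))"
definition fle :: "nat \<Rightarrow> nat list \<Rightarrow> nat" where "fle t R = hd (filter (\<lambda>x. x \<le> t) R)"
definition decr :: "(nat \<Rightarrow> nat) \<Rightarrow> nat \<Rightarrow> bool" where
  "decr lam n \<longleftrightarrow> (\<forall>i j. 1 \<le> i \<longrightarrow> i \<le> j \<longrightarrow> j \<le> n \<longrightarrow> lam j \<le> lam i)"
definition full :: "(nat \<Rightarrow> nat) \<Rightarrow> nat \<Rightarrow> nat \<Rightarrow> bool" where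
  "full lam n K \<longleftrightarrow> K \<le> n \<and> (\<forall>i. 1 \<le> i \<longrightarrow> i \<le> K \<longrightarrow> n \<le> lam i) \<and> (\<forall>i. K < i \<longrightarrow> i \<le> n \<longrightarrow> lam i < n)"
definition Pc :: "(nat \<Rightarrow> nat) \<Rightarrow> nat \<Rightarrow> nat \<Rightarrow> nat \<Rightarrow> nat" where
  "Pc lam n j x = card {R \<in> tr lam n. \<not> occP lam R \<and> fle j R = x}"
definition Qc :: "(nat \<Rightarrow> nat) \<Rightarrow> nat \<Rightarrow> nat \<Rightarrow> nat \<Rightarrow> nat" where
  "Qc lam n j x = card {R \<in> tr lam n. \<not> occQ lam R \<and> fle j R = x}"

lemma finite_tr: "finite (tr lam n)"
proof -
  have "tr lam n \<subseteq> {xs. set xs \<subseteq> {1..n} \<and> length xs = n}" unfolding tr_def by auto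
  moreover have "finite {xs. set xs \<subseteq> {1..n} \<and> length xs = n}"
    by (rule finite_lists_length_eq) simp
  ultimately show ?thesis by (rule finite_subset)
qed

lemma hd_filter_idx:
  assumes "\<exists>x\<in>set xs. P x"
  shows "\<exists>i<length xs. P (xs!i) \<and> (\<forall>i'<i. \<not> P (xs!i')) \<and> hd (filter P xs) = xs!i"
  using assms
proof (induction xs)
  case Nil then show ?case by simp
next
  case (Cons a xs)
  show ?case
  proof (cases "P a")
    case True then show ?thesis by (rule_tac x=0 in exI) simp
  next
    case False
    then have "\<exists>x\<in>set xs. P x" using Cons.prems by auto
    from Cons.IH[OF this] obtain i where i: "i<length xs" "P (xs!i)" "\<forall>i'<i. \<not> P (xs!i')" "hd (filter P xs) = xs!i" by blast
    show ?thesis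
      apply (rule_tac x="Suc i" in exI)
      using i False by (auto simp: less_Suc_eq_0_disj)
  qed
qed

lemma ins_mono: "ins r x < ins r y \<longleftrightarrow> x < y"
  unfolding ins_def by auto
lemma ins_inj: "ins r x = ins r y \<longleftrightarrow> x = y"
  unfolding ins_def by auto
lemma ins_neq: "ins r x \<noteq> r"
  unfolding ins_def by auto
lemma ins_del: "x \<noteq> r \<Longrightarrow> ins r (del r x) = x"
  unfolding ins_def del_def by auto
lemma del_ins: "del r (ins r x) = x"
  unfolding ins_def del_def by auto

lemma fle_bound:
  assumes "R \<in> tr lam m" "1 \<le> t" "t \<le> m"
  shows "fle t R \<in> {1..t}" "fle t R \<in> set R"
proof -
  have s: "set R = {1..m}" using assms(1) unfolding tr_def by auto
  have "\<exists>x\<in>set R. x \<le> t" using s assms by (intro bexI[of _ 1]) auto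
  then have ne: "filter (\<lambda>x. x \<le> t) R \<noteq> []" by (simp add: filter_empty_conv) 
  then have "fle t R \<in> set (filter (\<lambda>x. x \<le> t) R)" unfolding fle_def by (rule hd_in_set)
  then show "fle t R \<in> {1..t}" "fle t R \<in> set R" using s by auto
qed

lemma ext_len[simp]: "length (ext r xs) = Suc (length xs)"
  unfolding ext_def by simp
lemma ext_nth1: "i < length xs \<Longrightarrow> ext r xs ! i = ins r (xs!i)"
  unfolding ext_def by (simp add: nth_append)
lemma ext_nth2: "ext r xs ! length xs = r"
  unfolding ext_def by (simp add: nth_append)

lemma shr_eq:
  assumes "full lam (Suc m) K" "r \<in> {1..K}"
  shows "shr lam m r = shr lam m K"
proof
  fix i
  have F: "\<And>i. 1 \<le> i \<Longrightarrow> i \<le> K \<Longrightarrow> Suc m \<le> lam i" using assms(1) unfolding full_def by auto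
  show "shr lam m r i = shr lam m K i"
  proof (cases "i < r")
    case True
    then show ?thesis using assms(2) unfolding shr_def ins_def by auto
  next
    case False
    show ?thesis
    proof (cases "i < K")
      case True
      have "Suc m \<le> lam (Suc i)" using F[of "Suc i"] True by auto
      moreover have "Suc m \<le> lam i" using F[of i] True False assms(2) by auto
      ultimately show ?thesis using True False unfolding shr_def ins_def by auto
    next
      case False2: False
      then show ?thesis using False unfolding shr_def ins_def by auto
    qed
  qed
qed

lemma ins_image:
  assumes "1 \<le> r" "r \<le> Suc m"
  shows "ins r ` {1..m} = {1..Suc m} - {r}"
proof
  show "ins r ` {1..m} \<subseteq> {1..Suc m} - {r}" using assms unfolding ins_def by auto
  show "{1..Suc m} - {r} \<subseteq> ins r ` {1..m}"
  proof
    fix x assume x: "x \<in> {1..Suc m} - {r}"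
    then have "x = ins r (del r x)" using ins_del by auto
    moreover have "del r x \<in> {1..m}" using x assms unfolding del_def by auto
    ultimately show "x \<in> ins r ` {1..m}" by blast
  qed
qed

lemma tr_decomp:
  assumes "full lam (Suc m) K" "R \<in> tr lam (Suc m)"
  shows "\<exists>r\<in>{1..K}. \<exists>R'\<in>tr (shr lam m r) m. R = ext r R'"
proof -
  have R: "length R = Suc m" "distinct R" "set R = {1..Suc m}" "\<forall>i<Suc m. i < lam (R!i)"
    using assms(2) unfolding tr_def by auto
  define r where "r = R ! m"
  have rin: "r \<in> set R" using R(1) unfolding r_def by auto
  have "m < lam r" using R(4) unfolding r_def by auto
  moreover have "r \<in> {1..Suc m}" using rin R(3) by auto
  ultimately have r1: "r \<in> {1..K}"
  proof -
    assume a: "m < lam r" "r \<in> {1..Suc m}"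
    show ?thesis
    proof (rule ccontr)
      assume "r \<notin> {1..K}"
      then have "K < r" using a by auto
      then have "lam r < Suc m" using assms(1) a unfolding full_def by auto
      then show False using a by auto
    qed
  qed
  define B where "B = butlast R"
  have Rne: "R \<noteq> []" using R(1) by auto
  then have "R = butlast R @ [last R]" by simp
  moreover have "last R = R ! m" using R(1) Rne by (simp add: last_conv_nth)
  ultimately have RB: "R = B @ [r]" unfolding B_def r_def by simp
  have Bl: "length B = m" using R(1) unfolding B_def by simp
  have Bd: "distinct B" "r \<notin> set B" using R(2) RB by auto
  have Bs: "set B = {1..Suc m} - {r}" using R(3) RB Bd(2) by auto
  define R' where "R' = map (del r) B"
  have "\<forall>x\<in>set B. ins r (del r x) = x" using Bd(2) ins_del by metis
  then have "map (ins r) R' = B" unfolding R'_def by (simp add: map_idI)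
  then have ext: "R = ext r R'" unfolding ext_def using RB by simp
  have "R' \<in> tr (shr lam m r) m"
  proof -
    have "length R' = m" using Bl unfolding R'_def by simp
    moreover have "distinct R'" unfolding R'_def using Bd
      by (simp add: distinct_map inj_on_def) (metis ins_del)
    moreover have "set R' = {1..m}"
    proof -
      have "K \<le> Suc m" using assms(1) unfolding full_def by auto
      then have "ins r ` {1..m} = {1..Suc m} - {r}" using ins_image[of r m] r1 by auto
      moreover have "ins r ` set R' = set B" using \<open>map (ins r) R' = B\<close> by (metis list.set_map)
      ultimately have "ins r ` set R' = ins r ` {1..m}" using Bs by simp
      moreover have "inj (ins r)" by (simp add: inj_def ins_inj)
      ultimately show ?thesis by (simp add: inj_image_eq_iff)
    qed
    moreover have "\<forall>i<m. i < shr lam m r (R'!i)"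
    proof (intro allI impI)
      fix i assume i: "i < m"
      have "ins r (R'!i) = B ! i" using \<open>map (ins r) R' = B\<close> i Bl by (metis nth_map length_map)
      moreover have "B ! i = R ! i" using RB i Bl by (simp add: nth_append)
      ultimately show "i < shr lam m r (R'!i)" using R(4) i unfolding shr_def by auto
    qed
    ultimately show ?thesis unfolding tr_def by auto
  qed
  then show ?thesis using r1 ext by blast
qed

lemma ext_tr:
  assumes "full lam (Suc m) K" "r \<in> {1..K}" "R \<in> tr (shr lam m r) m"
  shows "ext r R \<in> tr lam (Suc m)"
proof -
  have R: "length R = m" "distinct R" "set R = {1..m}" "\<forall>i<m. i < shr lam m r (R!i)"
    using assms(3) unfolding tr_def by auto
  have K: "K \<le> Suc m" "Suc m \<le> lam r" using assms(1,2) unfolding full_def by auto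
  have "r \<notin> set (map (ins r) R)" by (auto simp: ins_def)
  then have "distinct (ext r R)" unfolding ext_def using R(2)
    by (auto simp: distinct_map inj_on_def ins_inj)
  moreover have "set (ext r R) = {1..Suc m}"
    unfolding ext_def using ins_image[of r m] R(3) assms(2) K by auto
  moreover have "\<forall>i<Suc m. i < lam (ext r R ! i)"
  proof (intro allI impI)
    fix i assume i: "i < Suc m"
    show "i < lam (ext r R ! i)"
    proof (cases "i < m")
      case True
      then show ?thesis using R(4) R(1) ext_nth1 unfolding shr_def by auto
    next
      case False
      then have "i = m" using i by auto
      then show ?thesis using ext_nth2 R(1) K by auto
    qed
  qed
  ultimately show ?thesis unfolding tr_def using R(1) by auto
qed

lemma ext_inj:
  assumes "ext r xs = ext r' ys"
  shows "r = r' \<and> xs = ys"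
proof -
  have 1: "r = r'" using assms unfolding ext_def by simp
  then have "map (ins r) xs = map (ins r) ys" using assms unfolding ext_def by simp
  moreover have "inj (ins r)" by (simp add: inj_def ins_inj)
  ultimately show ?thesis using 1 by (simp add: inj_map_eq_map)
qed

lemma card_split:
  assumes "full lam (Suc m) K"
  shows "card {R\<in>tr lam (Suc m). \<Phi> R} = (\<Sum>r\<in>{1..K}. card {R'\<in>tr (shr lam m K) m. \<Phi> (ext r R')})"
proof -
  have eq: "{R\<in>tr lam (Suc m). \<Phi> R} = (\<Union>r\<in>{1..K}. ext r ` {R'\<in>tr (shr lam m K) m. \<Phi> (ext r R')})"
  proof
    show "{R\<in>tr lam (Suc m). \<Phi> R} \<subseteq> (\<Union>r\<in>{1..K}. ext r ` {R'\<in>tr (shr lam m K) m. \<Phi> (ext r R')})"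
    proof
      fix R assume "R \<in> {R\<in>tr lam (Suc m). \<Phi> R}"
      then have R: "R \<in> tr lam (Suc m)" "\<Phi> R" by auto
      obtain r R' where "r \<in> {1..K}" "R' \<in> tr (shr lam m r) m" "R = ext r R'"
        using tr_decomp[OF assms R(1)] by blast
      moreover have "shr lam m r = shr lam m K" using shr_eq[OF assms] \<open>r \<in> {1..K}\<close> by blast
      ultimately show "R \<in> (\<Union>r\<in>{1..K}. ext r ` {R'\<in>tr (shr lam m K) m. \<Phi> (ext r R')})"
        using R(2) by auto
    qed
    show "(\<Union>r\<in>{1..K}. ext r ` {R'\<in>tr (shr lam m K) m. \<Phi> (ext r R')}) \<subseteq> {R\<in>tr lam (Suc m). \<Phi> R}"
    proof
      fix R assume "R \<in> (\<Union>r\<in>{1..K}. ext r ` {R'\<in>tr (shr lam m K) m. \<Phi> (ext r R')})"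
      then obtain r R' where r: "r \<in> {1..K}" "R' \<in> tr (shr lam m K) m" "\<Phi> (ext r R')" "R = ext r R'" by blast
      have "shr lam m r = shr lam m K" using shr_eq[OF assms] r(1) by blast
      then have "R' \<in> tr (shr lam m r) m" using r(2) by simp
      then have "ext r R' \<in> tr lam (Suc m)" using ext_tr[OF assms r(1)] by blast
      then show "R \<in> {R\<in>tr lam (Suc m). \<Phi> R}" using r by simp
    qed
  qed
  have "card (\<Union>r\<in>{1..K}. ext r ` {R'\<in>tr (shr lam m K) m. \<Phi> (ext r R')})
      = (\<Sum>r\<in>{1..K}. card (ext r ` {R'\<in>tr (shr lam m K) m. \<Phi> (ext r R')}))"
  proof (rule card_UN_disjoint)
    show "finite {1..K}" by simp
    show "\<forall>i::nat\<in>{1..K}. finite (ext i ` {R' \<in> tr (shr lam m K) m. \<Phi> (ext i R')})"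
      using finite_tr by auto
    show "\<forall>i::nat\<in>{1..K}. \<forall>j::nat\<in>{1..K}. i \<noteq> j \<longrightarrow>
        ext i ` {R' \<in> tr (shr lam m K) m. \<Phi> (ext i R')} \<inter> ext j ` {R' \<in> tr (shr lam m K) m. \<Phi> (ext j R')} = {}"
    proof (intro ballI impI)
      fix i j :: nat assume "i \<noteq> j"
      then show "ext i ` {R' \<in> tr (shr lam m K) m. \<Phi> (ext i R')} \<inter> ext j ` {R' \<in> tr (shr lam m K) m. \<Phi> (ext j R')} = {}"
        using ext_inj[of i _ j] by auto
    qed
  qed
  also have "\<dots> = (\<Sum>r\<in>{1..K}. card {R'\<in>tr (shr lam m K) m. \<Phi> (ext r R')})"
    apply (rule sum.cong, simp)
    apply (rule card_image)
    apply (rule inj_onI)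
    using ext_inj by simp
  finally show ?thesis using eq by simp
qed

lemma hd_filter_eq:
  assumes "i < length xs" "P (xs!i)" "\<forall>i'<i. \<not> P (xs!i')"
  shows "hd (filter P xs) = xs!i"
proof -
  obtain i0 where i0: "i0<length xs" "P (xs!i0)" "\<forall>i'<i0. \<not> P (xs!i')" "hd (filter P xs) = xs!i0"
    using hd_filter_idx[of xs P] assms by (meson nth_mem)
  have "i0 = i" using i0 assms by (meson linorder_neqE_nat)
  then show ?thesis using i0 by simp
qed

lemma Glem:
  assumes "distinct xs" "{1..t} \<subseteq> set xs" "0 \<notin> set xs" "S \<subseteq> {1..t}"
  shows "(\<exists>i j. i < j \<and> j < length xs \<and> xs!j \<in> S \<and> xs!i \<le> t) \<longleftrightarrow> \<not> S \<subseteq> {fle t xs}"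
proof
  assume "\<exists>i j. i < j \<and> j < length xs \<and> xs!j \<in> S \<and> xs!i \<le> t"
  then obtain i j where ij: "i < j" "j < length xs" "xs!j \<in> S" "xs!i \<le> t" by blast
  show "\<not> S \<subseteq> {fle t xs}"
  proof
    assume SS: "S \<subseteq> {fle t xs}"
    have "\<exists>x\<in>set xs. x \<le> t" using ij by (meson less_trans nth_mem)
    then obtain i0 where i0: "i0<length xs" "xs!i0 \<le> t" "\<forall>i'<i0. \<not> xs!i' \<le> t"
        "hd (filter (\<lambda>x. x \<le> t) xs) = xs!i0"
      using hd_filter_idx[of xs "\<lambda>x. x \<le> t"] by blast
    have "i0 \<le> i" using i0(3) ij(4) by (meson not_le)
    have "xs!j = xs!i0" using SS ij(3) i0(4) unfolding fle_def by auto
    then have "j = i0" using assms(1) ij(2) i0(1) by (simp add: nth_eq_iff_index_eq)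
    then show False using \<open>i0 \<le> i\<close> ij(1) by simp
  qed
next
  assume "\<not> S \<subseteq> {fle t xs}"
  then obtain v where v: "v \<in> S" "v \<noteq> fle t xs" by blast
  have "v \<in> set xs" "v \<le> t" using v(1) assms(2,4) by auto
  then obtain q where q: "q < length xs" "xs!q = v" by (meson in_set_conv_nth)
  have "\<exists>x\<in>set xs. x \<le> t" using \<open>v \<in> set xs\<close> \<open>v \<le> t\<close> by blast
  then obtain i0 where i0: "i0<length xs" "xs!i0 \<le> t" "\<forall>i'<i0. \<not> xs!i' \<le> t"
      "hd (filter (\<lambda>x. x \<le> t) xs) = xs!i0"
    using hd_filter_idx[of xs "\<lambda>x. x \<le> t"] by blast
  have "i0 \<le> q" using i0(3) q \<open>v \<le> t\<close> by (meson not_le)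
  moreover have "i0 \<noteq> q" using v(2) q(2) i0(4) unfolding fle_def by auto
  ultimately show "\<exists>i j. i < j \<and> j < length xs \<and> xs!j \<in> S \<and> xs!i \<le> t"
    using q i0 v(1) by (intro exI[of _ i0] exI[of _ q]) auto
qed

lemma full_lam_iff:
  assumes "full lam (Suc m) K" "v \<in> {1..Suc m}"
  shows "m < lam v \<longleftrightarrow> v \<le> K"
  using assms unfolding full_def by (metis atLeastAtMost_iff not_less_eq not_le)

lemma ins_le_iff:
  assumes "1 \<le> r" "r \<le> K"
  shows "ins r y \<le> K \<longleftrightarrow> y \<le> K - 1"
  using assms unfolding ins_def by auto

lemma ins_range:
  assumes "y \<in> {1..m}" "r \<in> {1..Suc m}"
  shows "ins r y \<in> {1..Suc m}"
  using assms unfolding ins_def by auto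

lemma occ_ext_split:
  assumes "full lam (Suc m) K" "r \<in> {1..K}" "R \<in> tr (shr lam m r) m"
  shows "occP lam (ext r R) \<longleftrightarrow> occP (shr lam m r) R \<or>
           (\<exists>i j. i < j \<and> j < m \<and> r < ins r (R!j) \<and> m < lam (ins r (R!i)) \<and> m < lam (ins r (R!j)))"
   and  "occQ lam (ext r R) \<longleftrightarrow> occQ (shr lam m r) R \<or>
           (\<exists>i j. i < j \<and> j < m \<and> ins r (R!j) < r \<and> m < lam (ins r (R!i)) \<and> m < lam (ins r (R!j)))"
proof -
  have len: "length R = m" using assms(3) unfolding tr_def by auto
  have lr: "m < lam r" using assms(1,2) unfolding full_def by auto
  have e1: "\<And>x. x < m \<Longrightarrow> ext r R ! x = ins r (R!x)" using ext_nth1 len by metis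
  have e2: "ext r R ! m = r" using ext_nth2 len by metis
  have sh: "\<And>l y. l < m \<Longrightarrow> l < lam (ins r y) \<longleftrightarrow> l < shr lam m r y" unfolding shr_def by auto
  show "occP lam (ext r R) \<longleftrightarrow> occP (shr lam m r) R \<or>
           (\<exists>i j. i < j \<and> j < m \<and> r < ins r (R!j) \<and> m < lam (ins r (R!i)) \<and> m < lam (ins r (R!j)))"
  proof
    assume "occP lam (ext r R)"
    then obtain i j l where o: "i < j" "j < l" "l < Suc m" "ext r R!l < ext r R!j"
      "l < lam (ext r R!i)" "l < lam (ext r R!j)" "l < lam (ext r R!l)"
      unfolding occP_def using len by auto
    show "occP (shr lam m r) R \<or>
           (\<exists>i j. i < j \<and> j < m \<and> r < ins r (R!j) \<and> m < lam (ins r (R!i)) \<and> m < lam (ins r (R!j)))"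
    proof (cases "l < m")
      case True
      then have "occP (shr lam m r) R" unfolding occP_def using o e1[of i] e1[of j] e1[of l] len sh[OF True]
        by (intro exI[of _ i] exI[of _ j] exI[of _ l]) (auto simp: ins_mono)
      then show ?thesis by simp
    next
      case False
      then have "l = m" using o(3) by simp
      then show ?thesis using o e1[of i] e1[of j] e2 by (intro disjI2 exI[of _ i] exI[of _ j]) auto
    qed
  next
    assume "occP (shr lam m r) R \<or>
           (\<exists>i j. i < j \<and> j < m \<and> r < ins r (R!j) \<and> m < lam (ins r (R!i)) \<and> m < lam (ins r (R!j)))"
    then show "occP lam (ext r R)"
    proof
      assume "occP (shr lam m r) R"
      then obtain i j l where o: "i < j" "j < l" "l < m" "R!l < R!j"
        "l < shr lam m r (R!i)" "l < shr lam m r (R!j)" "l < shr lam m r (R!l)"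
        unfolding occP_def using len by auto
      then show ?thesis unfolding occP_def using e1[of i] e1[of j] e1[of l] sh[OF o(3)] len
        by (intro exI[of _ i] exI[of _ j] exI[of _ l]) (auto simp: ins_mono)
    next
      assume "\<exists>i j. i < j \<and> j < m \<and> r < ins r (R!j) \<and> m < lam (ins r (R!i)) \<and> m < lam (ins r (R!j))"
      then obtain i j where o: "i < j" "j < m" "r < ins r (R!j)" "m < lam (ins r (R!i))" "m < lam (ins r (R!j))"
        by blast
      then show ?thesis unfolding occP_def using e1[of i] e1[of j] e2 lr len
        by (intro exI[of _ i] exI[of _ j] exI[of _ m]) auto
    qed
  qed
  show "occQ lam (ext r R) \<longleftrightarrow> occQ (shr lam m r) R \<or>
           (\<exists>i j. i < j \<and> j < m \<and> ins r (R!j) < r \<and> m < lam (ins r (R!i)) \<and> m < lam (ins r (R!j)))"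
  proof
    assume "occQ lam (ext r R)"
    then obtain i j l where o: "i < j" "j < l" "l < Suc m" "ext r R!j < ext r R!l"
      "l < lam (ext r R!i)" "l < lam (ext r R!j)" "l < lam (ext r R!l)"
      unfolding occQ_def using len by auto
    show "occQ (shr lam m r) R \<or>
           (\<exists>i j. i < j \<and> j < m \<and> ins r (R!j) < r \<and> m < lam (ins r (R!i)) \<and> m < lam (ins r (R!j)))"
    proof (cases "l < m")
      case True
      then have "occQ (shr lam m r) R" unfolding occQ_def using o e1[of i] e1[of j] e1[of l] len sh[OF True]
        by (intro exI[of _ i] exI[of _ j] exI[of _ l]) (auto simp: ins_mono)
      then show ?thesis by simp
    next
      case False
      then have "l = m" using o(3) by simp
      then show ?thesis using o e1[of i] e1[of j] e2 by (intro disjI2 exI[of _ i] exI[of _ j]) auto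
    qed
  next
    assume "occQ (shr lam m r) R \<or>
           (\<exists>i j. i < j \<and> j < m \<and> ins r (R!j) < r \<and> m < lam (ins r (R!i)) \<and> m < lam (ins r (R!j)))"
    then show "occQ lam (ext r R)"
    proof
      assume "occQ (shr lam m r) R"
      then obtain i j l where o: "i < j" "j < l" "l < m" "R!j < R!l"
        "l < shr lam m r (R!i)" "l < shr lam m r (R!j)" "l < shr lam m r (R!l)"
        unfolding occQ_def using len by auto
      then show ?thesis unfolding occQ_def using e1[of i] e1[of j] e1[of l] sh[OF o(3)] len
        by (intro exI[of _ i] exI[of _ j] exI[of _ l]) (auto simp: ins_mono)
    next
      assume "\<exists>i j. i < j \<and> j < m \<and> ins r (R!j) < r \<and> m < lam (ins r (R!i)) \<and> m < lam (ins r (R!j))"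
      then obtain i j where o: "i < j" "j < m" "ins r (R!j) < r" "m < lam (ins r (R!i))" "m < lam (ins r (R!j))"
        by blast
      then show ?thesis unfolding occQ_def using e1[of i] e1[of j] e2 lr len
        by (intro exI[of _ i] exI[of _ j] exI[of _ m]) auto
    qed
  qed
qed

lemma avoid_ext:
  assumes F: "full lam (Suc m) K" and r: "r \<in> {1..K}" and R: "R \<in> tr (shr lam m r) m"
  shows "\<not> occP lam (ext r R) \<longleftrightarrow> \<not> occP (shr lam m r) R \<and> {r..K-1} \<subseteq> {fle (K-1) R}"
    and "\<not> occQ lam (ext r R) \<longleftrightarrow> \<not> occQ (shr lam m r) R \<and> {1..r-1} \<subseteq> {fle (K-1) R}"
proof -
  have Rp: "length R = m" "distinct R" "set R = {1..m}" using R unfolding tr_def by auto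
  have Km: "K \<le> Suc m" using F unfolding full_def by auto
  have key: "\<And>y. y \<in> set R \<Longrightarrow> m < lam (ins r y) \<longleftrightarrow> y \<le> K - 1"
  proof -
    fix y assume "y \<in> set R"
    then have "ins r y \<in> {1..Suc m}" using ins_range Rp(3) r Km by auto
    then have "m < lam (ins r y) \<longleftrightarrow> ins r y \<le> K" using full_lam_iff[OF F] by blast
    also have "\<dots> \<longleftrightarrow> y \<le> K - 1" using ins_le_iff r by auto
    finally show "m < lam (ins r y) \<longleftrightarrow> y \<le> K - 1" .
  qed
  have G: "\<And>S. S \<subseteq> {1..K-1} \<Longrightarrow>
     (\<exists>i j. i < j \<and> j < length R \<and> R!j \<in> S \<and> R!i \<le> K-1) \<longleftrightarrow> \<not> S \<subseteq> {fle (K-1) R}"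
    by (rule Glem) (use Rp Km in auto)
  have nth: "\<And>i. i < m \<Longrightarrow> R!i \<in> set R" using Rp(1) by auto
  have "(\<exists>i j. i < j \<and> j < m \<and> r < ins r (R!j) \<and> m < lam (ins r (R!i)) \<and> m < lam (ins r (R!j)))
        \<longleftrightarrow> (\<exists>i j. i < j \<and> j < length R \<and> R!j \<in> {r..K-1} \<and> R!i \<le> K-1)"
    using key nth Rp(1) unfolding ins_def
    by (smt (verit) atLeastAtMost_iff less_Suc_eq_le less_trans nat_less_le not_less)
  moreover have "{r..K-1} \<subseteq> {1..K-1}" using r by auto
  ultimately show "\<not> occP lam (ext r R) \<longleftrightarrow> \<not> occP (shr lam m r) R \<and> {r..K-1} \<subseteq> {fle (K-1) R}"
    using occ_ext_split(1)[OF F r R] G[of "{r..K-1}"] by simp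
  have "(\<exists>i j. i < j \<and> j < m \<and> ins r (R!j) < r \<and> m < lam (ins r (R!i)) \<and> m < lam (ins r (R!j)))
        \<longleftrightarrow> (\<exists>i j. i < j \<and> j < length R \<and> R!j \<in> {1..r-1} \<and> R!i \<le> K-1)"
  proof -
    have a: "\<And>j. j < m \<Longrightarrow> ins r (R!j) < r \<longleftrightarrow> R!j \<in> {1..r-1}"
    proof -
      fix j assume "j < m"
      then have "1 \<le> R!j" using nth Rp(3) by fastforce
      then show "ins r (R!j) < r \<longleftrightarrow> R!j \<in> {1..r-1}" unfolding ins_def by auto
    qed
    have b: "\<And>j. j < m \<Longrightarrow> R!j \<in> {1..r-1} \<Longrightarrow> m < lam (ins r (R!j))"
      using key nth r by fastforce
    show ?thesis using a b key nth Rp(1) by (meson less_trans)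
  qed
  moreover have "{1..r-1} \<subseteq> {1..K-1}" using r by auto
  ultimately show "\<not> occQ lam (ext r R) \<longleftrightarrow> \<not> occQ (shr lam m r) R \<and> {1..r-1} \<subseteq> {fle (K-1) R}"
    using occ_ext_split(2)[OF F r R] G[of "{1..r-1}"] by simp
qed

lemma fle_ext:
  assumes F: "full lam (Suc m) K" and r: "r \<in> {1..K}" and R: "R \<in> tr (shr lam m r) m" and K2: "2 \<le> K"
  shows "fle K (ext r R) = ins r (fle (K-1) R)"
proof -
  have Rp: "set R = {1..m}" using R unfolding tr_def by auto
  have Km: "K \<le> Suc m" using F unfolding full_def by auto
  have "filter (\<lambda>x. x \<le> K) (map (ins r) R) = map (ins r) (filter (\<lambda>x. ins r x \<le> K) R)"
    by (simp add: filter_map comp_def)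
  also have "filter (\<lambda>x. ins r x \<le> K) R = filter (\<lambda>x. x \<le> K - 1) R"
    using ins_le_iff r by auto
  finally have 1: "filter (\<lambda>x. x \<le> K) (ext r R) = map (ins r) (filter (\<lambda>x. x \<le> K - 1) R) @ [r]"
    unfolding ext_def using r by simp
  have "1 \<in> set R" using Rp K2 Km by auto
  then have "\<exists>x\<in>set R. x \<le> K - 1" using K2 by (intro bexI[of _ 1]) auto
  then have "filter (\<lambda>x. x \<le> K - 1) R \<noteq> []" by (simp add: filter_empty_conv)
  then show ?thesis unfolding fle_def 1 by (simp add: hd_map)
qed

lemma wordP:
  assumes R: "R \<in> tr lam m" and F: "full lam m K" and A: "\<not> occP lam R" and j: "1 \<le> j" "j \<le> K"
  shows "fle j R = (if fle K R \<le> j then fle K R else 1)"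
proof -
  have Rp: "length R = m" "distinct R" "set R = {1..m}" using R unfolding tr_def by auto
  have Km: "K \<le> m" using F unfolding full_def by auto
  have full: "\<And>v. 1 \<le> v \<Longrightarrow> v \<le> K \<Longrightarrow> m \<le> lam v" using F unfolding full_def by auto
  have "\<exists>x\<in>set R. x \<le> K" using Rp j Km by (intro bexI[of _ 1]) auto
  then obtain i0 where i0: "i0<length R" "R!i0 \<le> K" "\<forall>i'<i0. \<not> R!i' \<le> K" "fle K R = R!i0"
    using hd_filter_idx[of R "\<lambda>x. x \<le> K"] unfolding fle_def by blast
  have x1: "1 \<le> R!i0" using Rp i0(1) by (metis atLeastAtMost_iff nth_mem)
  show ?thesis
  proof (cases "fle K R \<le> j")
    case True
    have "\<forall>i'<i0. \<not> R!i' \<le> j" using i0(3) j by (meson le_trans)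
    moreover have "R!i0 \<le> j" using True i0(4) by simp
    ultimately have "hd (filter (\<lambda>x. x \<le> j) R) = R!i0" using hd_filter_eq[of i0 R "\<lambda>x. x \<le> j"] i0(1) by blast
    then have "fle j R = R!i0" unfolding fle_def by simp
    then show ?thesis using True i0 by simp
  next
    case False
    have "\<exists>x\<in>set R. x \<le> j" using Rp j Km by (intro bexI[of _ 1]) auto
    then obtain p where p: "p<length R" "R!p \<le> j" "\<forall>i'<p. \<not> R!i' \<le> j" "fle j R = R!p"
      using hd_filter_idx[of R "\<lambda>x. x \<le> j"] unfolding fle_def by blast
    have "i0 \<le> p" using i0(3) p(2) j by (meson le_trans not_le)
    moreover have "i0 \<noteq> p" using False i0(4) p(2) by auto
    ultimately have ip: "i0 < p" by simp
    have "R!p = 1"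
    proof (rule ccontr)
      assume ne: "R!p \<noteq> 1"
      have "1 \<in> set R" using Rp j Km by auto
      then obtain q where q: "q < length R" "R!q = 1" by (meson in_set_conv_nth)
      have "p \<le> q" using p(3) q j by (metis not_le)
      moreover have "p \<noteq> q" using ne q by auto
      ultimately have pq: "p < q" by simp
      have z1: "1 \<le> R!p" using Rp p(1) by (metis atLeastAtMost_iff nth_mem)
      have "occP lam R" unfolding occP_def
        apply (rule exI[of _ i0], rule exI[of _ p], rule exI[of _ q])
        using ip pq q ne z1 full[of "R!i0"] full[of "R!p"] full[of 1] i0 p j x1 Rp(1)
        by auto
      then show False using A by simp
    qed
    then show ?thesis using False p(4) by simp
  qed
qed

lemma wordQ:
  assumes R: "R \<in> tr lam m" and F: "full lam m K" and A: "\<not> occQ lam R" and j: "1 \<le> j" "j \<le> K"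
  shows "fle j R = (if fle K R \<le> j then fle K R else j)"
proof -
  have Rp: "length R = m" "distinct R" "set R = {1..m}" using R unfolding tr_def by auto
  have Km: "K \<le> m" using F unfolding full_def by auto
  have full: "\<And>v. 1 \<le> v \<Longrightarrow> v \<le> K \<Longrightarrow> m \<le> lam v" using F unfolding full_def by auto
  have "\<exists>x\<in>set R. x \<le> K" using Rp j Km by (intro bexI[of _ 1]) auto
  then obtain i0 where i0: "i0<length R" "R!i0 \<le> K" "\<forall>i'<i0. \<not> R!i' \<le> K" "fle K R = R!i0"
    using hd_filter_idx[of R "\<lambda>x. x \<le> K"] unfolding fle_def by blast
  have x1: "1 \<le> R!i0" using Rp i0(1) by (metis atLeastAtMost_iff nth_mem)
  show ?thesis
  proof (cases "fle K R \<le> j")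
    case True
    have "\<forall>i'<i0. \<not> R!i' \<le> j" using i0(3) j by (meson le_trans)
    moreover have "R!i0 \<le> j" using True i0(4) by simp
    ultimately have "hd (filter (\<lambda>x. x \<le> j) R) = R!i0" using hd_filter_eq[of i0 R "\<lambda>x. x \<le> j"] i0(1) by blast
    then have "fle j R = R!i0" unfolding fle_def by simp
    then show ?thesis using True i0 by simp
  next
    case False
    have "\<exists>x\<in>set R. x \<le> j" using Rp j Km by (intro bexI[of _ 1]) auto
    then obtain p where p: "p<length R" "R!p \<le> j" "\<forall>i'<p. \<not> R!i' \<le> j" "fle j R = R!p"
      using hd_filter_idx[of R "\<lambda>x. x \<le> j"] unfolding fle_def by blast
    have "i0 \<le> p" using i0(3) p(2) j by (meson le_trans not_le)
    moreover have "i0 \<noteq> p" using False i0(4) p(2) by auto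
    ultimately have ip: "i0 < p" by simp
    have "R!p = j"
    proof (rule ccontr)
      assume ne: "R!p \<noteq> j"
      have "j \<in> set R" using Rp j Km by auto
      then obtain q where q: "q < length R" "R!q = j" by (meson in_set_conv_nth)
      have "p \<le> q" using p(3) q j by (metis le_refl not_le)
      moreover have "p \<noteq> q" using ne q by auto
      ultimately have pq: "p < q" by simp
      have z1: "1 \<le> R!p" using Rp p(1) by (metis atLeastAtMost_iff nth_mem)
      have "occQ lam R" unfolding occQ_def
        apply (rule exI[of _ i0], rule exI[of _ p], rule exI[of _ q])
        using ip pq q ne z1 full[of "R!i0"] full[of "R!p"] full[of j] i0 p j x1 Rp(1)
        by auto
      then show False using A by simp
    qed
    then show ?thesis using False p(4) by simp
  qed
qed

lemma card_filter_sum: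
  assumes "finite A" "finite X"
  shows "card {a\<in>A. g a \<in> X} = (\<Sum>x\<in>X. card {a\<in>A. g a = x})"
proof -
  have "{a\<in>A. g a \<in> X} = (\<Union>x\<in>X. {a\<in>A. g a = x})" by auto
  moreover have "card (\<Union>x\<in>X. {a\<in>A. g a = x}) = (\<Sum>x\<in>X. card {a\<in>A. g a = x})"
    by (rule card_UN_disjoint) (use assms in auto)
  ultimately show ?thesis by simp
qed

lemma sum_if_single:
  assumes "finite X" "c \<in> X"
  shows "(\<Sum>x\<in>X. if x = c then (\<beta>::nat) else \<alpha>) = \<beta> + (card X - 1) * \<alpha>"
proof -
  have "(\<Sum>x\<in>X. if x = c then \<beta> else \<alpha>) = \<beta> + (\<Sum>x\<in>X - {c}. if x = c then \<beta> else \<alpha>)"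
    using sum.remove[OF assms, of "\<lambda>x. if x = c then \<beta> else \<alpha>"] by simp
  also have "(\<Sum>x\<in>X - {c}. if x = c then \<beta> else \<alpha>) = (\<Sum>x\<in>X - {c}. \<alpha>)" by (rule sum.cong) auto
  also have "\<dots> = (card X - 1) * \<alpha>" using assms by (simp add: card_Diff_singleton)
  finally show ?thesis .
qed

lemma tr_empty:
  assumes "full lam m 0" "1 \<le> m"
  shows "tr lam m = {}"
proof (rule ccontr)
  assume "tr lam m \<noteq> {}"
  then obtain R where R: "R \<in> tr lam m" by blast
  then have Rp: "length R = m" "set R = {1..m}" "\<forall>i<m. i < lam (R!i)" unfolding tr_def by auto
  obtain i where i: "m = Suc i" using assms(2) by (cases m) auto
  have "R!i \<in> set R" using Rp(1) i by simp
  then have "R!i \<in> {1..m}" using Rp(2) by simp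
  moreover have "m \<le> lam (R!i)" using Rp(3) i by auto
  moreover have "\<forall>v. 0 < v \<longrightarrow> v \<le> m \<longrightarrow> lam v < m" using assms(1) unfolding full_def by auto
  ultimately show False by (metis atLeastAtMost_iff le_less_trans less_le_not_le not_one_le_zero not_less)
qed

lemma Pc_alt: "Pc lam m j x = card {R\<in>{R\<in>tr lam m. \<not> occP lam R}. fle j R = x}"
  unfolding Pc_def by (rule arg_cong[where f=card]) auto
lemma Qc_alt: "Qc lam m j x = card {R\<in>{R\<in>tr lam m. \<not> occQ lam R}. fle j R = x}"
  unfolding Qc_def by (rule arg_cong[where f=card]) auto

lemma totP:
  assumes F: "full lam m K" and K: "1 \<le> K" and H: "\<forall>x\<in>{1..K}. Pc lam m K x = (if x = 1 then \<beta> else \<alpha>)"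
  shows "card {R\<in>tr lam m. \<not> occP lam R} = \<beta> + (K-1)*\<alpha>"
proof -
  have Km: "K \<le> m" using F unfolding full_def by auto
  let ?A = "{R\<in>tr lam m. \<not> occP lam R}"
  have "\<forall>R\<in>?A. fle K R \<in> {1..K}" using fle_bound(1)[OF _ K Km] by blast
  then have "?A = {R\<in>?A. fle K R \<in> {1..K}}" by blast
  also have "card \<dots> = (\<Sum>x\<in>{1..K}. card {R\<in>?A. fle K R = x})"
    by (rule card_filter_sum) (use finite_tr in auto)
  also have "\<dots> = (\<Sum>x\<in>{1..K}. if x = 1 then \<beta> else \<alpha>)"
    by (rule sum.cong) (use H Pc_alt in auto)
  also have "\<dots> = \<beta> + (K-1)*\<alpha>" using sum_if_single[of "{1..K}" 1] K by simp
  finally show ?thesis .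
qed

lemma totQ:
  assumes F: "full lam m K" and K: "1 \<le> K" and H: "\<forall>x\<in>{1..K}. Qc lam m K x = (if x = K then \<beta> else \<alpha>)"
  shows "card {R\<in>tr lam m. \<not> occQ lam R} = \<beta> + (K-1)*\<alpha>"
proof -
  have Km: "K \<le> m" using F unfolding full_def by auto
  let ?A = "{R\<in>tr lam m. \<not> occQ lam R}"
  have "\<forall>R\<in>?A. fle K R \<in> {1..K}" using fle_bound(1)[OF _ K Km] by blast
  then have "?A = {R\<in>?A. fle K R \<in> {1..K}}" by blast
  also have "card \<dots> = (\<Sum>x\<in>{1..K}. card {R\<in>?A. fle K R = x})"
    by (rule card_filter_sum) (use finite_tr in auto)
  also have "\<dots> = (\<Sum>x\<in>{1..K}. if x = K then \<beta> else \<alpha>)"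
    by (rule sum.cong) (use H Qc_alt in auto)
  also have "\<dots> = \<beta> + (K-1)*\<alpha>" using sum_if_single[of "{1..K}" K] K by simp
  finally show ?thesis .
qed

lemma DlemP:
  assumes F: "full lam m K" and H: "\<forall>x\<in>{1..K}. Pc lam m K x = (if x = 1 then \<beta> else \<alpha>)"
    and j: "1 \<le> j" "j \<le> K" and z: "z \<in> {1..j}"
  shows "Pc lam m j z = (if z = 1 then \<beta> + (K-j)*\<alpha> else \<alpha>)"
proof -
  have Km: "K \<le> m" using F unfolding full_def by auto
  let ?A = "{R\<in>tr lam m. \<not> occP lam R}"
  have W: "\<And>R. R \<in> ?A \<Longrightarrow> fle j R = (if fle K R \<le> j then fle K R else 1)"
    using wordP[OF _ F _ j] by blast
  have B: "\<And>R. R \<in> ?A \<Longrightarrow> fle K R \<in> {1..K}" using fle_bound(1)[OF _ _ Km] j by auto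
  show ?thesis
  proof (cases "z = 1")
    case False
    have "\<forall>R\<in>?A. (fle j R = z) \<longleftrightarrow> (fle K R = z)"
    proof
      fix R assume R: "R \<in> ?A"
      show "(fle j R = z) \<longleftrightarrow> (fle K R = z)" using W[OF R] z False by auto
    qed
    then have "{R\<in>?A. fle j R = z} = {R\<in>?A. fle K R = z}" by auto
    then have "Pc lam m j z = Pc lam m K z" unfolding Pc_alt by simp
    then show ?thesis using H z j False by auto
  next
    case True
    have "\<forall>R\<in>?A. (fle j R = 1) \<longleftrightarrow> (fle K R \<in> insert 1 {Suc j..K})"
    proof
      fix R assume R: "R \<in> ?A"
      show "(fle j R = 1) \<longleftrightarrow> (fle K R \<in> insert 1 {Suc j..K})" using W[OF R] B[OF R] j by auto
    qed
    then have "{R\<in>?A. fle j R = 1} = {R\<in>?A. fle K R \<in> insert 1 {Suc j..K}}" by auto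
    also have "card \<dots> = (\<Sum>x\<in>insert 1 {Suc j..K}. card {R\<in>?A. fle K R = x})"
      by (rule card_filter_sum) (use finite_tr in auto)
    also have "\<dots> = (\<Sum>x\<in>insert 1 {Suc j..K}. if x = 1 then \<beta> else \<alpha>)"
    proof (rule sum.cong, simp)
      fix x assume "x \<in> insert 1 {Suc j..K}"
      then have "x \<in> {1..K}" using j by auto
      then show "card {R\<in>?A. fle K R = x} = (if x = 1 then \<beta> else \<alpha>)"
        using H Pc_alt by metis
    qed
    also have "\<dots> = \<beta> + (card (insert 1 {Suc j..K}) - 1) * \<alpha>" by (rule sum_if_single) auto
    also have "card (insert 1 {Suc j..K}) = Suc (K - j)" using j by simp
    finally show ?thesis using Pc_alt True by simp
  qed
qed

lemma DlemQ:
  assumes F: "full lam m K" and H: "\<forall>x\<in>{1..K}. Qc lam m K x = (if x = K then \<beta> else \<alpha>)"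
    and j: "1 \<le> j" "j \<le> K" and z: "z \<in> {1..j}"
  shows "Qc lam m j z = (if z = j then \<beta> + (K-j)*\<alpha> else \<alpha>)"
proof -
  have Km: "K \<le> m" using F unfolding full_def by auto
  let ?A = "{R\<in>tr lam m. \<not> occQ lam R}"
  have W: "\<And>R. R \<in> ?A \<Longrightarrow> fle j R = (if fle K R \<le> j then fle K R else j)"
    using wordQ[OF _ F _ j] by blast
  have B: "\<And>R. R \<in> ?A \<Longrightarrow> fle K R \<in> {1..K}" using fle_bound(1)[OF _ _ Km] j by auto
  show ?thesis
  proof (cases "z = j")
    case False
    have "\<forall>R\<in>?A. (fle j R = z) \<longleftrightarrow> (fle K R = z)"
    proof
      fix R assume R: "R \<in> ?A"
      show "(fle j R = z) \<longleftrightarrow> (fle K R = z)" using W[OF R] z False by auto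
    qed
    then have "{R\<in>?A. fle j R = z} = {R\<in>?A. fle K R = z}" by auto
    then have "Qc lam m j z = Qc lam m K z" unfolding Qc_alt by simp
    then show ?thesis using H z j False by auto
  next
    case True
    have "\<forall>R\<in>?A. (fle j R = j) \<longleftrightarrow> (fle K R \<in> {j..K})"
    proof
      fix R assume R: "R \<in> ?A"
      show "(fle j R = j) \<longleftrightarrow> (fle K R \<in> {j..K})" using W[OF R] B[OF R] j by auto
    qed
    then have "{R\<in>?A. fle j R = j} = {R\<in>?A. fle K R \<in> {j..K}}" by auto
    also have "card \<dots> = (\<Sum>x\<in>{j..K}. card {R\<in>?A. fle K R = x})"
      by (rule card_filter_sum) (use finite_tr in auto)
    also have "\<dots> = (\<Sum>x\<in>{j..K}. if x = K then \<beta> else \<alpha>)"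
    proof (rule sum.cong, simp)
      fix x assume "x \<in> {j..K}"
      then have "x \<in> {1..K}" using j by auto
      then show "card {R\<in>?A. fle K R = x} = (if x = K then \<beta> else \<alpha>)"
        using H Qc_alt by metis
    qed
    also have "\<dots> = \<beta> + (card {j..K} - 1) * \<alpha>" by (rule sum_if_single) (use j in auto)
    also have "card {j..K} = Suc (K - j)" using j by simp
    finally show ?thesis using Qc_alt True by simp
  qed
qed

lemma sum_two:
  assumes "finite A" "a \<in> A" "b \<in> A" "a \<noteq> b" "\<forall>r\<in>A - {a,b}. f r = (0::nat)"
  shows "sum f A = f a + f b"
proof -
  have "sum f A = sum f {a,b}" by (rule sum.mono_neutral_right) (use assms in auto)
  then show ?thesis using assms(4) by simp
qed

lemma split_sets:
  assumes F: "full lam (Suc m) K" and r: "r \<in> {1..K}"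
  shows "{R'\<in>tr (shr lam m K) m. \<not> occP lam (ext r R') \<and> fle K (ext r R') = x}
       = {R'\<in>tr (shr lam m K) m. \<not> occP (shr lam m K) R' \<and> {r..K-1} \<subseteq> {fle (K-1) R'} \<and>
            (if K = 1 then r else ins r (fle (K-1) R')) = x}"
    and "{R'\<in>tr (shr lam m K) m. \<not> occQ lam (ext r R') \<and> fle K (ext r R') = x}
       = {R'\<in>tr (shr lam m K) m. \<not> occQ (shr lam m K) R' \<and> {1..r-1} \<subseteq> {fle (K-1) R'} \<and>
            (if K = 1 then r else ins r (fle (K-1) R')) = x}"
proof -
  have sh: "shr lam m r = shr lam m K" using shr_eq[OF F r] .
  have fl: "\<And>R'. R' \<in> tr (shr lam m K) m \<Longrightarrow> fle K (ext r R') = (if K = 1 then r else ins r (fle (K-1) R'))"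
  proof -
    fix R' assume R': "R' \<in> tr (shr lam m K) m"
    show "fle K (ext r R') = (if K = 1 then r else ins r (fle (K-1) R'))"
    proof (cases "K = 1")
      case True
      have "ext r R' \<in> tr lam (Suc m)" using ext_tr[OF F r] R' sh by simp
      then have "fle 1 (ext r R') \<in> {1..1}" using fle_bound(1)[of "ext r R'" lam "Suc m" 1] by simp
      then show ?thesis using True r by simp
    next
      case False
      then have "2 \<le> K" using r by auto
      then show ?thesis using fle_ext[OF F r _] R' sh False by simp
    qed
  qed
  show "{R'\<in>tr (shr lam m K) m. \<not> occP lam (ext r R') \<and> fle K (ext r R') = x}
       = {R'\<in>tr (shr lam m K) m. \<not> occP (shr lam m K) R' \<and> {r..K-1} \<subseteq> {fle (K-1) R'} \<and>
            (if K = 1 then r else ins r (fle (K-1) R')) = x}"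
  proof (rule Collect_cong)
    fix R'
    show "(R' \<in> tr (shr lam m K) m \<and> \<not> occP lam (ext r R') \<and> fle K (ext r R') = x) =
          (R' \<in> tr (shr lam m K) m \<and> \<not> occP (shr lam m K) R' \<and> {r..K-1} \<subseteq> {fle (K-1) R'} \<and>
            (if K = 1 then r else ins r (fle (K-1) R')) = x)"
    proof (cases "R' \<in> tr (shr lam m K) m")
      case True
      have a: "(\<not> occP lam (ext r R')) = (\<not> occP (shr lam m K) R' \<and> {r..K-1} \<subseteq> {fle (K-1) R'})"
        using avoid_ext(1)[OF F r, of R'] sh True by simp
      have b: "fle K (ext r R') = (if K = 1 then r else ins r (fle (K-1) R'))" using fl True by simp
      show ?thesis by (simp only: a b conj_assoc)
    next
      case False
      then show ?thesis by simp
    qed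
  qed
  show "{R'\<in>tr (shr lam m K) m. \<not> occQ lam (ext r R') \<and> fle K (ext r R') = x}
       = {R'\<in>tr (shr lam m K) m. \<not> occQ (shr lam m K) R' \<and> {1..r-1} \<subseteq> {fle (K-1) R'} \<and>
            (if K = 1 then r else ins r (fle (K-1) R')) = x}"
  proof (rule Collect_cong)
    fix R'
    show "(R' \<in> tr (shr lam m K) m \<and> \<not> occQ lam (ext r R') \<and> fle K (ext r R') = x) =
          (R' \<in> tr (shr lam m K) m \<and> \<not> occQ (shr lam m K) R' \<and> {1..r-1} \<subseteq> {fle (K-1) R'} \<and>
            (if K = 1 then r else ins r (fle (K-1) R')) = x)"
    proof (cases "R' \<in> tr (shr lam m K) m")
      case True
      have a: "(\<not> occQ lam (ext r R')) = (\<not> occQ (shr lam m K) R' \<and> {1..r-1} \<subseteq> {fle (K-1) R'})"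
        using avoid_ext(2)[OF F r, of R'] sh True by simp
      have b: "fle K (ext r R') = (if K = 1 then r else ins r (fle (K-1) R'))" using fl True by simp
      show ?thesis by (simp only: a b conj_assoc)
    next
      case False
      then show ?thesis by simp
    qed
  qed
qed

lemma stepK1:
  assumes F: "full lam (Suc m) 1"
  shows "Pc lam (Suc m) 1 1 = card {R\<in>tr (shr lam m 1) m. \<not> occP (shr lam m 1) R}"
    and "Qc lam (Suc m) 1 1 = card {R\<in>tr (shr lam m 1) m. \<not> occQ (shr lam m 1) R}"
proof -
  have "Pc lam (Suc m) 1 1 = (\<Sum>r\<in>{1..1}. card {R'\<in>tr (shr lam m 1) m. \<not> occP lam (ext r R') \<and> fle 1 (ext r R') = 1})"
    unfolding Pc_def by (rule card_split[OF F])
  also have "\<dots> = card {R'\<in>tr (shr lam m 1) m. \<not> occP lam (ext 1 R') \<and> fle 1 (ext 1 R') = 1}" by simp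
  also have "\<dots> = card {R\<in>tr (shr lam m 1) m. \<not> occP (shr lam m 1) R}"
    using split_sets(1)[OF F, of 1 1] by simp
  finally show "Pc lam (Suc m) 1 1 = card {R\<in>tr (shr lam m 1) m. \<not> occP (shr lam m 1) R}" .
  have "Qc lam (Suc m) 1 1 = (\<Sum>r\<in>{1..1}. card {R'\<in>tr (shr lam m 1) m. \<not> occQ lam (ext r R') \<and> fle 1 (ext r R') = 1})"
    unfolding Qc_def by (rule card_split[OF F])
  also have "\<dots> = card {R'\<in>tr (shr lam m 1) m. \<not> occQ lam (ext 1 R') \<and> fle 1 (ext 1 R') = 1}" by simp
  also have "\<dots> = card {R\<in>tr (shr lam m 1) m. \<not> occQ (shr lam m 1) R}"
    using split_sets(2)[OF F, of 1 1] by simp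
  finally show "Qc lam (Suc m) 1 1 = card {R\<in>tr (shr lam m 1) m. \<not> occQ (shr lam m 1) R}" .
qed

lemma stepP:
  assumes F: "full lam (Suc m) K" and K2: "2 \<le> K" and x: "x \<in> {1..K}"
  shows "Pc lam (Suc m) K x = (if x \<le> K-1 then Pc (shr lam m K) m (K-1) x else Pc (shr lam m K) m (K-1) (K-1))"
proof -
  let ?L = "shr lam m K"
  have Km: "K \<le> Suc m" using F unfolding full_def by auto
  have hb: "\<And>R'. R' \<in> tr ?L m \<Longrightarrow> fle (K-1) R' \<in> {1..K-1}" using fle_bound(1) K2 Km by auto
  define f where "f r = card {R'\<in>tr ?L m. \<not> occP ?L R' \<and> {r..K-1} \<subseteq> {fle (K-1) R'} \<and> ins r (fle (K-1) R') = x}" for r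
  have "Pc lam (Suc m) K x = (\<Sum>r\<in>{1..K}. card {R'\<in>tr ?L m. \<not> occP lam (ext r R') \<and> fle K (ext r R') = x})"
    unfolding Pc_def by (rule card_split[OF F])
  also have "\<dots> = (\<Sum>r\<in>{1..K}. f r)"
  proof (rule sum.cong, simp)
    fix r assume r: "r \<in> {1..K}"
    show "card {R'\<in>tr ?L m. \<not> occP lam (ext r R') \<and> fle K (ext r R') = x} = f r"
      unfolding f_def split_sets(1)[OF F r] using K2 by simp
  qed
  also have "\<dots> = f (K-1) + f K"
  proof (rule sum_two)
    show "\<forall>r\<in>{1..K} - {K-1, K}. f r = 0"
    proof
      fix r assume r: "r \<in> {1..K} - {K-1, K}"
      have E: "{R'\<in>tr ?L m. \<not> occP ?L R' \<and> {r..K-1} \<subseteq> {fle (K-1) R'} \<and> ins r (fle (K-1) R') = x} = {}"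
      proof -
        have "\<not> {r..K-1} \<subseteq> {h}" for h
        proof
          assume S: "{r..K-1} \<subseteq> {h}"
          have a: "r \<in> {r..K-1}" and b: "K-1 \<in> {r..K-1}" using r by auto
          have "r = h" using subsetD[OF S a] by simp
          moreover have "K-1 = h" using subsetD[OF S b] by simp
          ultimately have "r = K-1" by simp
          then show False using r by auto
        qed
        then show ?thesis by auto
      qed
      show "f r = 0" unfolding f_def E by simp
    qed
  qed (use K2 in auto)
  finally have S: "Pc lam (Suc m) K x = f (K-1) + f K" .
  have fK: "f K = Pc ?L m (K-1) x"
  proof -
    have "{R'\<in>tr ?L m. \<not> occP ?L R' \<and> {K..K-1} \<subseteq> {fle (K-1) R'} \<and> ins K (fle (K-1) R') = x}
        = {R'\<in>tr ?L m. \<not> occP ?L R' \<and> fle (K-1) R' = x}"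
    proof (rule Collect_cong)
      fix R'
      show "(R' \<in> tr ?L m \<and> \<not> occP ?L R' \<and> {K..K-1} \<subseteq> {fle (K-1) R'} \<and> ins K (fle (K-1) R') = x) =
            (R' \<in> tr ?L m \<and> \<not> occP ?L R' \<and> fle (K-1) R' = x)"
        using hb[of R'] K2 unfolding ins_def by auto
    qed
    then show ?thesis unfolding f_def Pc_def by simp
  qed
  have fK1: "f (K-1) = (if x = K then Pc ?L m (K-1) (K-1) else 0)"
  proof -
    have Eq: "{R'\<in>tr ?L m. \<not> occP ?L R' \<and> {K-1..K-1} \<subseteq> {fle (K-1) R'} \<and> ins (K-1) (fle (K-1) R') = x}
        = {R'\<in>tr ?L m. \<not> occP ?L R' \<and> fle (K-1) R' = K-1 \<and> x = K}"
    proof (rule Collect_cong)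
      fix R'
      show "(R' \<in> tr ?L m \<and> \<not> occP ?L R' \<and> {K-1..K-1} \<subseteq> {fle (K-1) R'} \<and> ins (K-1) (fle (K-1) R') = x) =
            (R' \<in> tr ?L m \<and> \<not> occP ?L R' \<and> fle (K-1) R' = K-1 \<and> x = K)"
        using K2 unfolding ins_def by auto
    qed
    have "f (K-1) = card {R'\<in>tr ?L m. \<not> occP ?L R' \<and> fle (K-1) R' = K-1 \<and> x = K}"
      unfolding f_def Eq ..
    then show ?thesis unfolding Pc_def by (cases "x = K") simp_all
  qed
  have PK: "Pc ?L m (K-1) K = 0"
  proof -
    have E: "{R\<in>tr ?L m. \<not> occP ?L R \<and> fle (K-1) R = K} = {}" using hb K2 by fastforce
    show ?thesis unfolding Pc_def E by simp
  qed
  show ?thesis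
  proof (cases "x \<le> K-1")
    case True
    then show ?thesis using S fK fK1 K2 by auto
  next
    case False
    then have "x = K" using x by auto
    then show ?thesis using S fK fK1 PK K2 by auto
  qed
qed

lemma stepQ:
  assumes F: "full lam (Suc m) K" and K2: "2 \<le> K" and x: "x \<in> {1..K}"
  shows "Qc lam (Suc m) K x = (if x = 1 then Qc (shr lam m K) m (K-1) 1 else Qc (shr lam m K) m (K-1) (x-1))"
proof -
  let ?L = "shr lam m K"
  have Km: "K \<le> Suc m" using F unfolding full_def by auto
  have hb: "\<And>R'. R' \<in> tr ?L m \<Longrightarrow> fle (K-1) R' \<in> {1..K-1}" using fle_bound(1) K2 Km by auto
  define f where "f r = card {R'\<in>tr ?L m. \<not> occQ ?L R' \<and> {1..r-1} \<subseteq> {fle (K-1) R'} \<and> ins r (fle (K-1) R') = x}" for r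
  have "Qc lam (Suc m) K x = (\<Sum>r\<in>{1..K}. card {R'\<in>tr ?L m. \<not> occQ lam (ext r R') \<and> fle K (ext r R') = x})"
    unfolding Qc_def by (rule card_split[OF F])
  also have "\<dots> = (\<Sum>r\<in>{1..K}. f r)"
  proof (rule sum.cong, simp)
    fix r assume r: "r \<in> {1..K}"
    show "card {R'\<in>tr ?L m. \<not> occQ lam (ext r R') \<and> fle K (ext r R') = x} = f r"
      unfolding f_def split_sets(2)[OF F r] using K2 by simp
  qed
  also have "\<dots> = f 1 + f 2"
  proof (rule sum_two)
    show "\<forall>r\<in>{1..K} - {1, 2}. f r = 0"
    proof
      fix r assume r: "r \<in> {1..K} - {1, 2}"
      have E: "{R'\<in>tr ?L m. \<not> occQ ?L R' \<and> {1..r-1} \<subseteq> {fle (K-1) R'} \<and> ins r (fle (K-1) R') = x} = {}"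
      proof -
        have "\<not> {1..r-1} \<subseteq> {h}" for h
        proof
          assume S: "{1..r-1} \<subseteq> {h}"
          have a: "1 \<in> {1..r-1}" and b: "2 \<in> {1..r-1}" using r by auto
          have "1 = h" using subsetD[OF S a] by simp
          moreover have "2 = h" using subsetD[OF S b] by simp
          ultimately show False by simp
        qed
        then show ?thesis by auto
      qed
      show "f r = 0" unfolding f_def E by simp
    qed
  qed (use K2 in auto)
  finally have S: "Qc lam (Suc m) K x = f 1 + f 2" .
  have f1: "f 1 = (if x = 1 then 0 else Qc ?L m (K-1) (x-1))"
  proof -
    have Eq: "{R'\<in>tr ?L m. \<not> occQ ?L R' \<and> {1..1-1} \<subseteq> {fle (K-1) R'} \<and> ins 1 (fle (K-1) R') = x}
        = {R'\<in>tr ?L m. \<not> occQ ?L R' \<and> fle (K-1) R' = x - 1 \<and> x \<noteq> 1}"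
    proof (rule Collect_cong)
      fix R'
      show "(R' \<in> tr ?L m \<and> \<not> occQ ?L R' \<and> {1..1-1} \<subseteq> {fle (K-1) R'} \<and> ins 1 (fle (K-1) R') = x) =
            (R' \<in> tr ?L m \<and> \<not> occQ ?L R' \<and> fle (K-1) R' = x - 1 \<and> x \<noteq> 1)"
        using hb[of R'] unfolding ins_def by auto
    qed
    have "f 1 = card {R'\<in>tr ?L m. \<not> occQ ?L R' \<and> fle (K-1) R' = x - 1 \<and> x \<noteq> 1}"
      unfolding f_def Eq ..
    then show ?thesis unfolding Qc_def by (cases "x = 1") simp_all
  qed
  have f2: "f 2 = (if x = 1 then Qc ?L m (K-1) 1 else 0)"
  proof -
    have Eq: "{R'\<in>tr ?L m. \<not> occQ ?L R' \<and> {1..2-1} \<subseteq> {fle (K-1) R'} \<and> ins 2 (fle (K-1) R') = x}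
        = {R'\<in>tr ?L m. \<not> occQ ?L R' \<and> fle (K-1) R' = 1 \<and> x = 1}"
    proof (rule Collect_cong)
      fix R'
      show "(R' \<in> tr ?L m \<and> \<not> occQ ?L R' \<and> {1..2-1} \<subseteq> {fle (K-1) R'} \<and> ins 2 (fle (K-1) R') = x) =
            (R' \<in> tr ?L m \<and> \<not> occQ ?L R' \<and> fle (K-1) R' = 1 \<and> x = 1)"
        unfolding ins_def by auto
    qed
    have "f 2 = card {R'\<in>tr ?L m. \<not> occQ ?L R' \<and> fle (K-1) R' = 1 \<and> x = 1}"
      unfolding f_def Eq ..
    then show ?thesis unfolding Qc_def by (cases "x = 1") simp_all
  qed
  show ?thesis using S f1 f2 by auto
qed

lemma ins_le_mono: "i \<le> j \<Longrightarrow> ins K i \<le> ins K j"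
  unfolding ins_def by auto

lemma decr_shr:
  assumes D: "decr lam (Suc m)" and F: "full lam (Suc m) K" and K: "1 \<le> K"
  shows "decr (shr lam m K) m"
  unfolding decr_def
proof (intro allI impI)
  fix i j assume ij: "1 \<le> i" "i \<le> j" "j \<le> m"
  have Km: "K \<le> Suc m" using F unfolding full_def by auto
  have "1 \<le> ins K i" using ij unfolding ins_def by auto
  moreover have "ins K i \<le> ins K j" using ij(2) by (rule ins_le_mono)
  moreover have "ins K j \<le> Suc m" using ij Km unfolding ins_def by auto
  ultimately have "lam (ins K j) \<le> lam (ins K i)" using D unfolding decr_def by blast
  then show "shr lam m K j \<le> shr lam m K i" unfolding shr_def by simp
qed

lemma full_exists:
  assumes D: "decr lam n"
  shows "\<exists>K. full lam n K"
proof -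
  define S where "S = {i\<in>{1..n}. n \<le> lam i}"
  show ?thesis
  proof (cases "S = {}")
    case True
    then have "full lam n 0" unfolding full_def S_def by auto
    then show ?thesis by blast
  next
    case False
    have fin: "finite S" unfolding S_def by simp
    define M where "M = Max S"
    have MS: "M \<in> S" using Max_in[OF fin False] unfolding M_def .
    have "full lam n M" unfolding full_def
    proof (intro conjI allI impI)
      show "M \<le> n" using MS unfolding S_def by auto
    next
      fix i assume i: "1 \<le> i" "i \<le> M"
      have "lam M \<le> lam i" using D i MS unfolding decr_def S_def by auto
      then show "n \<le> lam i" using MS unfolding S_def by auto
    next
      fix i assume i: "M < i" "i \<le> n"
      show "lam i < n"
      proof (rule ccontr)
        assume "\<not> lam i < n"
        then have "i \<in> S" using i MS unfolding S_def by auto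
        then have "i \<le> M" unfolding M_def using fin by simp
        then show False using i by simp
      qed
    qed
    then show ?thesis by blast
  qed
qed

lemma fullK_ge:
  assumes F: "full lam (Suc m) K" and F': "full (shr lam m K) m K'" and K: "1 \<le> K"
  shows "K - 1 \<le> K'"
proof (rule ccontr)
  assume "\<not> K - 1 \<le> K'"
  then have a: "Suc K' \<le> K - 1" by simp
  have Km: "K \<le> Suc m" using F unfolding full_def by auto
  have "ins K (Suc K') = Suc K'" using a unfolding ins_def by auto
  moreover have "Suc m \<le> lam (Suc K')" using F a unfolding full_def by auto
  ultimately have "shr lam m K (Suc K') = m" unfolding shr_def by simp
  moreover have "shr lam m K (Suc K') < m" using F' a Km unfolding full_def by auto
  ultimately show False by simp
qed

lemma occ_short: "occP lam R \<Longrightarrow> 3 \<le> length R" "occQ lam R \<Longrightarrow> 3 \<le> length R"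
  unfolding occP_def occQ_def by auto

lemma main:
  "decr lam (Suc m) \<Longrightarrow> full lam (Suc m) K \<Longrightarrow>
   \<exists>\<alpha> \<beta>. \<forall>x\<in>{1..K}. Pc lam (Suc m) K x = (if x = 1 then \<beta> else \<alpha>) \<and> Qc lam (Suc m) K x = (if x = K then \<beta> else \<alpha>)"
proof (induction m arbitrary: lam K)
  case 0
  have K1: "K \<le> 1" using "0.prems"(2) unfolding full_def by auto
  have nocc: "\<not> occP lam R \<and> \<not> occQ lam R" if "R \<in> tr lam 1" for R
  proof -
    have "length R = 1" using that unfolding tr_def by simp
    then show ?thesis using occ_short[of lam R] by linarith
  qed
  have eq: "Qc lam 1 1 1 = Pc lam 1 1 1"
  proof -
    have "{R\<in>tr lam 1. \<not> occQ lam R \<and> fle 1 R = 1} = {R\<in>tr lam 1. \<not> occP lam R \<and> fle 1 R = 1}"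
      using nocc by blast
    then show ?thesis unfolding Pc_def Qc_def by simp
  qed
  have ev: "\<forall>x\<in>{1..K}. x = 1 \<and> K = 1" using K1 by auto
  show ?case
    apply (rule exI[of _ 0], rule exI[of _ "Pc lam 1 1 1"])
    apply (intro ballI)
    subgoal premises p for x
    proof -
      have "x = 1" "K = 1" using ev p by auto
      then show ?thesis using eq by simp
    qed
    done
next
  case (Suc m)
  note D = Suc.prems(1) and F = Suc.prems(2)
  show ?case
  proof (cases "K = 0")
    case True
    then show ?thesis by simp
  next
    case False
    then have K1: "1 \<le> K" by simp
    let ?L = "shr lam (Suc m) K"
    have DL: "decr ?L (Suc m)" using decr_shr[OF D F K1] .
    obtain K' where F': "full ?L (Suc m) K'" using full_exists[OF DL] by blast
    obtain \<alpha>' \<beta>' where IH: "\<forall>x\<in>{1..K'}. Pc ?L (Suc m) K' x = (if x = 1 then \<beta>' else \<alpha>') \<and>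
        Qc ?L (Suc m) K' x = (if x = K' then \<beta>' else \<alpha>')"
      using Suc.IH[OF DL F'] by blast
    have HP: "\<forall>x\<in>{1..K'}. Pc ?L (Suc m) K' x = (if x = 1 then \<beta>' else \<alpha>')" using IH by blast
    have HQ: "\<forall>x\<in>{1..K'}. Qc ?L (Suc m) K' x = (if x = K' then \<beta>' else \<alpha>')" using IH by blast
    have KK: "K - 1 \<le> K'" using fullK_ge[OF F F' K1] .
    show ?thesis
    proof (cases "K = 1")
      case True
      have F1: "full lam (Suc (Suc m)) 1" using F True by simp
      have tot: "card {R\<in>tr ?L (Suc m). \<not> occP ?L R} = card {R\<in>tr ?L (Suc m). \<not> occQ ?L R}"
      proof (cases "K' = 0")
        case True
        then have "tr ?L (Suc m) = {}" using tr_empty F' by simp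
        then show ?thesis by simp
      next
        case False
        then have "1 \<le> K'" by simp
        then show ?thesis using totP[OF F' _ HP] totQ[OF F' _ HQ] by simp
      qed
      have "Pc lam (Suc (Suc m)) 1 1 = Qc lam (Suc (Suc m)) 1 1"
        using stepK1[OF F1] tot True by simp
      then show ?thesis using True
        by (intro exI[of _ 0] exI[of _ "Pc lam (Suc (Suc m)) 1 1"]) auto
    next
      case False
      then have K2: "2 \<le> K" using K1 by simp
      define B where "B = \<beta>' + (K' - (K-1)) * \<alpha>'"
      have j: "1 \<le> K - 1" "K - 1 \<le> K'" using K2 KK by auto
      have DP: "\<And>z. z \<in> {1..K-1} \<Longrightarrow> Pc ?L (Suc m) (K-1) z = (if z = 1 then B else \<alpha>')"
        using DlemP[OF F' HP j] unfolding B_def by blast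
      have DQ: "\<And>z. z \<in> {1..K-1} \<Longrightarrow> Qc ?L (Suc m) (K-1) z = (if z = K-1 then B else \<alpha>')"
        using DlemQ[OF F' HQ j] unfolding B_def by blast
      have PP: "Pc lam (Suc (Suc m)) K x = (if x = 1 then B else if K = 2 then B else \<alpha>')"
        if x: "x \<in> {1..K}" for x
        proof (cases "x \<le> K - 1")
          case True
          have s1: "Pc lam (Suc (Suc m)) K x = Pc ?L (Suc m) (K-1) x" using stepP[OF F K2 x] True by simp
          have xx: "x \<in> {1..K-1}" using x True by simp
          have s2: "Pc ?L (Suc m) (K-1) x = (if x = 1 then B else \<alpha>')" using DP[OF xx] .
          show ?thesis
          proof (cases "x = 1")
            case True
            then show ?thesis using s1 s2 by simp
          next
            case False
            then have "K \<noteq> 2" using x \<open>x \<le> K - 1\<close> by auto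
            then show ?thesis using s1 s2 False by simp
          qed
        next
          case False
          then have xK: "x = K" using x by simp
          have s1: "Pc lam (Suc (Suc m)) K x = Pc ?L (Suc m) (K-1) (K-1)" using stepP[OF F K2 x] False by simp
          have xx: "K-1 \<in> {1..K-1}" using K2 by simp
          have s2: "Pc ?L (Suc m) (K-1) (K-1) = (if K-1 = 1 then B else \<alpha>')" using DP[OF xx] .
          have "x \<noteq> 1" using xK K2 by simp
          moreover have "(K - 1 = 1) = (K = 2)" using K2 by arith
          ultimately show ?thesis using s1 s2 by simp
        qed
      have QQ: "Qc lam (Suc (Suc m)) K x = (if x = K then B else if K = 2 then B else \<alpha>')"
        if x: "x \<in> {1..K}" for x
        proof (cases "x = 1")
          case True
          have s1: "Qc lam (Suc (Suc m)) K x = Qc ?L (Suc m) (K-1) 1" using stepQ[OF F K2 x] True by simp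
          have xx: "1 \<in> {1..K-1}" using K2 by simp
          have s2: "Qc ?L (Suc m) (K-1) 1 = (if 1 = K-1 then B else \<alpha>')" using DQ[OF xx] .
          have "x \<noteq> K" using True K2 by simp
          moreover have "(1 = K - 1) = (K = 2)" using K2 by arith
          ultimately show ?thesis using s1 s2 by simp
        next
          case False
          have s1: "Qc lam (Suc (Suc m)) K x = Qc ?L (Suc m) (K-1) (x-1)" using stepQ[OF F K2 x] False by simp
          have xx: "x-1 \<in> {1..K-1}" using x False by auto
          have s2: "Qc ?L (Suc m) (K-1) (x-1) = (if x-1 = K-1 then B else \<alpha>')" using DQ[OF xx] .
          have e: "(x - 1 = K - 1) = (x = K)" using x False by auto
          show ?thesis
          proof (cases "x = K")
            case True
            then show ?thesis using s1 s2 e by simp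
          next
            case False2: False
            then have "K \<noteq> 2" using x False by auto
            then show ?thesis using s1 s2 e False2 by simp
          qed
        qed
      show ?thesis
        apply (rule exI[of _ "if K = 2 then B else \<alpha>'"], rule exI[of _ B])
        using PP QQ by blast
    qed
  qed
qed

definition sg :: "nat list \<Rightarrow> nat \<Rightarrow> nat" where "sg xs = (\<lambda>b. xs!(b-1))"
lemma t3: "{1..3::nat} = {1,2,3}" by auto
lemma sg3: "sg xs (Suc 0) = xs!0" "sg xs 1 = xs!0" "sg xs 2 = xs!1" "sg xs 3 = xs!2" by (simp_all add: sg_def)

definition toT :: "nat \<Rightarrow> nat list \<Rightarrow> (nat \<times> nat) set" where
  "toT n R = {(i, j). j \<in> {1..n} \<and> i = R!(j-1)}"

lemma strict_mono3:
  assumes "u < v" "v < w"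
  shows "strict_mono_on {1..3} (\<lambda>x::nat. if x = 1 then u else if x = 2 then v else (w::nat))"
  unfolding strict_mono_on_def t3 using assms by auto

lemma ow_dest:
  assumes R: "R \<in> tr lam n" and O: "occurs_with n lam (toT n R) 3 \<sigma>" and S: "\<sigma> ` {1..3} \<subseteq> {1..3}"
  shows "\<exists>i j l. i < j \<and> j < l \<and> l < n \<and> l < lam (R!i) \<and> l < lam (R!j) \<and> l < lam (R!l) \<and>
     (\<sigma> 3 < \<sigma> 2 \<longrightarrow> R!l < R!j) \<and> (\<sigma> 2 < \<sigma> 3 \<longrightarrow> R!j < R!l)"
proof -
  obtain r c where rc: "strict_mono_on {1..3} r" "strict_mono_on {1..3} c"
    "\<forall>a\<in>{1..3}. \<forall>b\<in>{1..3}. (r a, c b) \<in> cells n lam" "\<forall>b\<in>{1..3}. (r (\<sigma> b), c b) \<in> toT n R"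
    using O unfolding occurs_with_def by blast
  have T: "\<And>b. b \<in> {1..3} \<Longrightarrow> c b \<in> {1..n} \<and> r (\<sigma> b) = R!(c b - 1)"
    using rc(4) unfolding toT_def by auto
  have c12: "c 1 < c 2" and c23: "c 2 < c 3" using rc(2) unfolding strict_mono_on_def by auto
  have c1: "1 \<le> c 1" "c 3 \<le> n" using T[of 1] T[of 3] by auto
  define i where "i = c 1 - 1"
  define j where "j = c 2 - 1"
  define l where "l = c 3 - 1"
  have ijl: "i < j" "j < l" "l < n" unfolding i_def j_def l_def using c12 c23 c1 by auto
  have Ri: "R!i = r (\<sigma> 1)" "R!j = r (\<sigma> 2)" "R!l = r (\<sigma> 3)" unfolding i_def j_def l_def using T by auto
  have lam: "\<And>b. b \<in> {1..3} \<Longrightarrow> l < lam (r (\<sigma> b))"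
  proof -
    fix b :: nat assume b: "b \<in> {1..3}"
    then have "\<sigma> b \<in> {1..3}" using S b by blast
    then have "(r (\<sigma> b), c 3) \<in> cells n lam" using rc(3) by auto
    then have "c 3 \<le> lam (r (\<sigma> b))" unfolding cells_def by auto
    then show "l < lam (r (\<sigma> b))" unfolding l_def using c1 c12 c23 by auto
  qed
  have "(2::nat) \<in> {1..3}" "(3::nat) \<in> {1..3}" by auto
  then have s23: "\<sigma> 2 \<in> {1..3}" "\<sigma> 3 \<in> {1..3}" using S by blast+
  have o1: "\<sigma> 3 < \<sigma> 2 \<longrightarrow> R!l < R!j" using rc(1) s23 Ri unfolding strict_mono_on_def by auto
  have o2: "\<sigma> 2 < \<sigma> 3 \<longrightarrow> R!j < R!l" using rc(1) s23 Ri unfolding strict_mono_on_def by auto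
  show ?thesis using ijl lam[of 1] lam[of 2] lam[of 3] Ri o1 o2 by (intro exI[of _ i] exI[of _ j] exI[of _ l]) auto
qed

lemma ow_intro:
  assumes R: "R \<in> tr lam n" and ijl: "i < j" "j < l" "l < n"
    and L: "l < lam (R!i)" "l < lam (R!j)" "l < lam (R!l)"
    and r: "strict_mono_on {1..3} r" "\<forall>a\<in>{1..3}. r a \<in> {R!i, R!j, R!l}"
    and s: "r (\<sigma> 1) = R!i" "r (\<sigma> 2) = R!j" "r (\<sigma> 3) = R!l"
  shows "occurs_with n lam (toT n R) 3 \<sigma>"
  unfolding occurs_with_def
proof (rule exI[of _ r], rule exI[of _ "\<lambda>x::nat. if x = 1 then Suc i else if x = 2 then Suc j else Suc l"], intro conjI)
  have Rp: "length R = n" "set R = {1..n}" using R unfolding tr_def by auto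
  show "strict_mono_on {1..3} r" using r(1) .
  show "strict_mono_on {1..3} (\<lambda>x::nat. if x = 1 then Suc i else if x = 2 then Suc j else Suc l)"
    using strict_mono3[of "Suc i" "Suc j" "Suc l"] ijl by simp
  have mem: "\<And>v. v \<in> {R!i, R!j, R!l} \<Longrightarrow> v \<in> {1..n} \<and> l < lam v"
  proof -
    fix v assume "v \<in> {R!i, R!j, R!l}"
    moreover have "R!i \<in> set R" "R!j \<in> set R" "R!l \<in> set R" using ijl Rp(1) by auto
    ultimately show "v \<in> {1..n} \<and> l < lam v" using Rp(2) L by auto
  qed
  show "\<forall>a\<in>{1..3}. \<forall>b::nat\<in>{1..3}. (r a, if b = 1 then Suc i else if b = 2 then Suc j else Suc l) \<in> cells n lam"
  proof (intro ballI)
    fix a b :: nat assume a: "a \<in> {1..3}" and b: "b \<in> {1..3}"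
    have "r a \<in> {1..n}" "l < lam (r a)" using mem r(2) a by auto
    then show "(r a, if b = 1 then Suc i else if b = 2 then Suc j else Suc l) \<in> cells n lam"
      unfolding cells_def using ijl by auto
  qed
  show "\<forall>b::nat\<in>{1..3}. (r (\<sigma> b), if b = 1 then Suc i else if b = 2 then Suc j else Suc l) \<in> toT n R"
    unfolding t3 toT_def using s ijl by auto
qed

lemma bij_sg:
  "bij_betw (sg [1,3,2]) {1..3} {1..3}" "bij_betw (sg [2,3,1]) {1..3} {1..3}" "bij_betw (sg [3,2,1]) {1..3} {1..3}"
  "bij_betw (sg [1,2,3]) {1..3} {1..3}" "bij_betw (sg [2,1,3]) {1..3} {1..3}" "bij_betw (sg [3,1,2]) {1..3} {1..3}"
  unfolding bij_betw_def t3 by (auto simp: sg3)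

lemma occP_intro:
  assumes R: "R \<in> tr lam n" and O: "occP lam R"
  shows "\<exists>xs\<in>{[1,3,2],[2,3,1],[3,2,1]}. occurs_with n lam (toT n R) 3 (sg xs)"
proof -
  have Rp: "length R = n" "distinct R" using R unfolding tr_def by auto
  obtain i j l where o: "i < j" "j < l" "l < n" "R!l < R!j" "l < lam (R!i)" "l < lam (R!j)" "l < lam (R!l)"
    using O Rp(1) unfolding occP_def by auto
  have d1: "R!i \<noteq> R!l" using Rp o by (simp add: nth_eq_iff_index_eq)
  have d2: "R!i \<noteq> R!j" using Rp o by (simp add: nth_eq_iff_index_eq)
  consider (a) "R!i < R!l" | (b) "R!l < R!i" "R!i < R!j" | (c) "R!j < R!i" using d1 d2 o(4) by linarith
  then show ?thesis
  proof cases
    case a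
    have "occurs_with n lam (toT n R) 3 (sg [1,3,2])"
      by (rule ow_intro[OF R o(1-3) o(5-7), where r="\<lambda>x. if x = 1 then R!i else if x = 2 then R!l else R!j"])
         (use strict_mono3[of "R!i" "R!l" "R!j"] a o(4) in \<open>auto simp: sg3 t3\<close>)
    then show ?thesis by auto
  next
    case b
    have "occurs_with n lam (toT n R) 3 (sg [2,3,1])"
      by (rule ow_intro[OF R o(1-3) o(5-7), where r="\<lambda>x. if x = 1 then R!l else if x = 2 then R!i else R!j"])
         (use strict_mono3[of "R!l" "R!i" "R!j"] b in \<open>auto simp: sg3 t3\<close>)
    then show ?thesis by auto
  next
    case c
    have "occurs_with n lam (toT n R) 3 (sg [3,2,1])"
      by (rule ow_intro[OF R o(1-3) o(5-7), where r="\<lambda>x. if x = 1 then R!l else if x = 2 then R!j else R!i"])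
         (use strict_mono3[of "R!l" "R!j" "R!i"] c o(4) in \<open>auto simp: sg3 t3\<close>)
    then show ?thesis by auto
  qed
qed

lemma occQ_intro:
  assumes R: "R \<in> tr lam n" and O: "occQ lam R"
  shows "\<exists>xs\<in>{[1,2,3],[2,1,3],[3,1,2]}. occurs_with n lam (toT n R) 3 (sg xs)"
proof -
  have Rp: "length R = n" "distinct R" using R unfolding tr_def by auto
  obtain i j l where o: "i < j" "j < l" "l < n" "R!j < R!l" "l < lam (R!i)" "l < lam (R!j)" "l < lam (R!l)"
    using O Rp(1) unfolding occQ_def by auto
  have d1: "R!i \<noteq> R!l" using Rp o by (simp add: nth_eq_iff_index_eq)
  have d2: "R!i \<noteq> R!j" using Rp o by (simp add: nth_eq_iff_index_eq)
  consider (a) "R!i < R!j" | (b) "R!j < R!i" "R!i < R!l" | (c) "R!l < R!i" using d1 d2 o(4) by linarith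
  then show ?thesis
  proof cases
    case a
    have "occurs_with n lam (toT n R) 3 (sg [1,2,3])"
      by (rule ow_intro[OF R o(1-3) o(5-7), where r="\<lambda>x. if x = 1 then R!i else if x = 2 then R!j else R!l"])
         (use strict_mono3[of "R!i" "R!j" "R!l"] a o(4) in \<open>auto simp: sg3 t3\<close>)
    then show ?thesis by auto
  next
    case b
    have "occurs_with n lam (toT n R) 3 (sg [2,1,3])"
      by (rule ow_intro[OF R o(1-3) o(5-7), where r="\<lambda>x. if x = 1 then R!j else if x = 2 then R!i else R!l"])
         (use strict_mono3[of "R!j" "R!i" "R!l"] b in \<open>auto simp: sg3 t3\<close>)
    then show ?thesis by auto
  next
    case c
    have "occurs_with n lam (toT n R) 3 (sg [3,1,2])"
      by (rule ow_intro[OF R o(1-3) o(5-7), where r="\<lambda>x. if x = 1 then R!j else if x = 2 then R!l else R!i"])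
         (use strict_mono3[of "R!j" "R!l" "R!i"] c o(4) in \<open>auto simp: sg3 t3\<close>)
    then show ?thesis by auto
  qed
qed

lemma ferrers_decr:
  assumes "ferrers n lam"
  shows "decr lam n"
proof -
  have st: "\<forall>i\<in>{1..<n}. lam (Suc i) \<le> lam i" using assms unfolding ferrers_def by auto
  have "\<And>j. \<forall>i. 1 \<le> i \<longrightarrow> i \<le> j \<longrightarrow> j \<le> n \<longrightarrow> lam j \<le> lam i"
  proof -
    fix j show "\<forall>i. 1 \<le> i \<longrightarrow> i \<le> j \<longrightarrow> j \<le> n \<longrightarrow> lam j \<le> lam i"
    proof (induction j)
      case 0 then show ?case by auto
    next
      case (Suc j)
      show ?case
      proof (intro allI impI)
        fix i assume i: "1 \<le> i" "i \<le> Suc j" "Suc j \<le> n"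
        show "lam (Suc j) \<le> lam i"
        proof (cases "i = Suc j")
          case True then show ?thesis by simp
        next
          case False
          then have "i \<le> j" using i by simp
          then have "lam j \<le> lam i" using Suc.IH i by auto
          moreover have "lam (Suc j) \<le> lam j" using st i \<open>i \<le> j\<close> by auto
          ultimately show ?thesis by simp
        qed
      qed
    qed
  qed
  then show ?thesis unfolding decr_def by blast
qed

lemma equal_counts:
  assumes "ferrers n lam"
  shows "card {R\<in>tr lam n. \<not> occP lam R} = card {R\<in>tr lam n. \<not> occQ lam R}"
proof -
  have n: "0 < n" using assms unfolding ferrers_def by auto
  then obtain m where m: "n = Suc m" by (cases n) auto
  have D: "decr lam n" using ferrers_decr[OF assms] .
  obtain K where F: "full lam n K" using full_exists[OF D] by blast
  show ?thesis
  proof (cases "K = 0")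
    case True
    then have "tr lam n = {}" using tr_empty F n by simp
    then show ?thesis by simp
  next
    case False
    then have K1: "1 \<le> K" by simp
    obtain \<alpha> \<beta> where H: "\<forall>x\<in>{1..K}. Pc lam (Suc m) K x = (if x = 1 then \<beta> else \<alpha>) \<and>
        Qc lam (Suc m) K x = (if x = K then \<beta> else \<alpha>)"
      using main[of lam m K] D F m by blast
    have HP: "\<forall>x\<in>{1..K}. Pc lam n K x = (if x = 1 then \<beta> else \<alpha>)" using H m by simp
    have HQ: "\<forall>x\<in>{1..K}. Qc lam n K x = (if x = K then \<beta> else \<alpha>)" using H m by simp
    show ?thesis using totP[OF F K1 HP] totQ[OF F K1 HQ] by simp
  qed
qed

lemma T1:
  assumes Fe: "ferrers n lam" and R: "R \<in> tr lam n"
  shows "transversal n lam (toT n R)"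
proof -
  have Rp: "length R = n" "distinct R" "set R = {1..n}" "\<forall>i<n. i < lam (R!i)" using R unfolding tr_def by auto
  have l1: "lam 1 = n" using Fe unfolding ferrers_def by auto
  have sub: "toT n R \<subseteq> cells n lam"
  proof
    fix p assume "p \<in> toT n R"
    then obtain j where j: "j \<in> {1..n}" "p = (R!(j-1), j)" unfolding toT_def by auto
    have "j - 1 < n" using j by auto
    then have "R!(j-1) \<in> {1..n}" "j - 1 < lam (R!(j-1))" using Rp by (auto simp del: atLeastAtMost_iff)
    then show "p \<in> cells n lam" unfolding cells_def using j by auto
  qed
  have rows: "\<forall>i\<in>{1..n}. \<exists>!j. (i, j) \<in> toT n R"
  proof
    fix i assume "i \<in> {1..n}"
    then have "i \<in> set R" using Rp by simp
    then obtain q where q: "q < n" "R!q = i" using Rp(1) by (metis in_set_conv_nth)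
    show "\<exists>!j. (i, j) \<in> toT n R"
    proof (rule ex1I[of _ "Suc q"])
      show "(i, Suc q) \<in> toT n R" unfolding toT_def using q by auto
    next
      fix j assume "(i, j) \<in> toT n R"
      then have j: "j \<in> {1..n}" "i = R!(j-1)" unfolding toT_def by auto
      then have "R!(j-1) = R!q" using q by simp
      moreover have "j - 1 < n" using j by auto
      ultimately have "j - 1 = q" using nth_eq_iff_index_eq[OF Rp(2), of "j-1" q] Rp(1) q by simp
      then show "j = Suc q" using j by auto
    qed
  qed
  have cols: "\<forall>j\<in>{1..lam 1}. \<exists>!i. (i, j) \<in> toT n R"
    unfolding l1 toT_def by auto
  show ?thesis unfolding transversal_def using sub rows cols by blast
qed

lemma T2:
  assumes Fe: "ferrers n lam" and T: "transversal n lam T"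
  shows "\<exists>R\<in>tr lam n. T = toT n R"
proof -
  have l1: "lam 1 = n" using Fe unfolding ferrers_def by auto
  have D: "decr lam n" using ferrers_decr[OF Fe] .
  have Tp: "T \<subseteq> cells n lam" "\<forall>i\<in>{1..n}. \<exists>!j. (i, j) \<in> T" "\<forall>j\<in>{1..n}. \<exists>!i. (i, j) \<in> T"
    using T l1 unfolding transversal_def by auto
  define R where "R = map (\<lambda>j. THE i. (i, j) \<in> T) [1..<Suc n]"
  have Rl: "length R = n" unfolding R_def by simp
  have Rn: "\<And>q. q < n \<Longrightarrow> R!q = (THE i. (i, Suc q) \<in> T)"
  proof -
    fix q assume q: "q < n"
    have "[1..<Suc n] ! q = Suc q" using q by (simp del: upt_Suc add: nth_upt)
    moreover have "q < length [1..<Suc n]" using q by simp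
    ultimately show "R!q = (THE i. (i, Suc q) \<in> T)" unfolding R_def by (simp del: upt_Suc)
  qed
  have inT: "\<And>q. q < n \<Longrightarrow> (R!q, Suc q) \<in> T"
  proof -
    fix q assume q: "q < n"
    then have "\<exists>!i. (i, Suc q) \<in> T" using Tp(3) by auto
    then show "(R!q, Suc q) \<in> T" unfolding Rn[OF q] by (rule theI')
  qed
  have cellp: "\<And>i j. (i, j) \<in> T \<Longrightarrow> i \<in> {1..n} \<and> 1 \<le> j \<and> j \<le> lam i" using Tp(1) unfolding cells_def by auto
  have eqT: "T = toT n R"
  proof
    show "T \<subseteq> toT n R"
    proof
      fix p assume p: "p \<in> T"
      obtain i j where ij: "p = (i, j)" by (cases p)
      have c: "i \<in> {1..n}" "1 \<le> j" "j \<le> lam i" using cellp p ij by auto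
      have "lam i \<le> lam 1" using D c unfolding decr_def by auto
      then have jn: "j \<in> {1..n}" using c l1 by auto
      have "(R!(j-1), j) \<in> T" using inT[of "j-1"] jn by auto
      moreover have "(i, j) \<in> T" using p ij by simp
      moreover have "\<exists>!i. (i, j) \<in> T" using Tp(3) jn by blast
      ultimately have "i = R!(j-1)" by blast
      then show "p \<in> toT n R" unfolding toT_def using ij jn by auto
    qed
    show "toT n R \<subseteq> T"
    proof
      fix p assume "p \<in> toT n R"
      then obtain j where j: "j \<in> {1..n}" "p = (R!(j-1), j)" unfolding toT_def by auto
      then show "p \<in> T" using inT[of "j-1"] by auto
    qed
  qed
  have "R \<in> tr lam n"
  proof -
    have dist: "distinct R"
    proof (rule distinct_conv_nth[THEN iffD2], intro allI impI)
      fix a b assume ab: "a < length R" "b < length R" "a \<noteq> b"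
      show "R!a \<noteq> R!b"
      proof
        assume e: "R!a = R!b"
        have "(R!a, Suc a) \<in> T" using inT ab Rl by simp
        moreover have "(R!b, Suc b) \<in> T" using inT ab Rl by simp
        ultimately have a1: "(R!a, Suc a) \<in> T" and a2: "(R!a, Suc b) \<in> T" using e by simp_all
        have "R!a \<in> {1..n}" using cellp a1 by auto
        then have u: "\<exists>!j. (R!a, j) \<in> T" using Tp(2) by blast
        have "Suc a = Suc b" using u a1 a2 by blast
        then show False using ab by simp
      qed
    qed
    have setR: "set R = {1..n}"
    proof
      show "set R \<subseteq> {1..n}"
      proof
        fix x assume "x \<in> set R"
        then obtain q where "q < n" "R!q = x" using Rl by (metis in_set_conv_nth)
        then show "x \<in> {1..n}" using cellp inT by blast
      qed
      show "{1..n} \<subseteq> set R"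
      proof
        fix i assume i: "i \<in> {1..n}"
        then obtain j where j: "(i, j) \<in> T" using Tp(2) by blast
        have c: "i \<in> {1..n}" "1 \<le> j" "j \<le> lam i" using cellp j by auto
        have "lam i \<le> lam 1" using D c unfolding decr_def by auto
        then have "j \<in> {1..n}" using c l1 by auto
        then have "i = R!(j-1)" using eqT j unfolding toT_def by auto
        then show "i \<in> set R" using \<open>j \<in> {1..n}\<close> Rl by auto
      qed
    qed
    have "\<forall>q<n. q < lam (R!q)" using cellp inT by fastforce
    then show ?thesis unfolding tr_def using Rl dist setR by auto
  qed
  then show ?thesis using eqT by blast
qed

lemma T3: "inj_on (toT n) (tr lam n)"
proof (rule inj_onI)
  fix R R' assume R: "R \<in> tr lam n" and R': "R' \<in> tr lam n" and e: "toT n R = toT n R'"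
  have l: "length R = n" "length R' = n" using R R' unfolding tr_def by auto
  show "R = R'"
  proof (rule nth_equalityI)
    show "length R = length R'" using l by simp
    fix q assume "q < length R"
    then have "(R!q, Suc q) \<in> toT n R" unfolding toT_def using l by auto
    then have "(R!q, Suc q) \<in> toT n R'" using e by simp
    then show "R!q = R'!q" unfolding toT_def by auto
  qed
qed

lemma transfer_card:
  assumes Fe: "ferrers n lam" and XY: "\<And>R. R \<in> tr lam n \<Longrightarrow> X (toT n R) = Y R"
  shows "card {T. transversal n lam T \<and> X T} = card {R\<in>tr lam n. Y R}"
proof -
  have "{T. transversal n lam T \<and> X T} = toT n ` {R\<in>tr lam n. Y R}"
  proof
    show "{T. transversal n lam T \<and> X T} \<subseteq> toT n ` {R\<in>tr lam n. Y R}"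
    proof
      fix T assume "T \<in> {T. transversal n lam T \<and> X T}"
      then have T: "transversal n lam T" "X T" by auto
      obtain R where "R \<in> tr lam n" "T = toT n R" using T2[OF Fe T(1)] by blast
      then show "T \<in> toT n ` {R\<in>tr lam n. Y R}" using XY T(2) by auto
    qed
    show "toT n ` {R\<in>tr lam n. Y R} \<subseteq> {T. transversal n lam T \<and> X T}"
      using T1[OF Fe] XY by auto
  qed
  moreover have "card (toT n ` {R\<in>tr lam n. Y R}) = card {R\<in>tr lam n. Y R}"
    by (rule card_image) (rule inj_on_subset[OF T3], auto)
  ultimately show ?thesis by simp
qed

lemma cperm_sg: "length \<alpha> = 3 \<Longrightarrow> contains_perm n lam T \<alpha> = occurs_with n lam T 3 (sg \<alpha>)"
  unfolding contains_perm_def sg_def by simp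

lemma sg_img:
  "sg [1,3,2] ` {1..3} \<subseteq> {1..3}" "sg [2,3,1] ` {1..3} \<subseteq> {1..3}" "sg [3,2,1] ` {1..3} \<subseteq> {1..3}"
  "sg [1,2,3] ` {1..3} \<subseteq> {1..3}" "sg [2,1,3] ` {1..3} \<subseteq> {1..3}" "sg [3,1,2] ` {1..3} \<subseteq> {1..3}"
  using bij_sg by (simp_all add: bij_betw_def)

lemma pop_P:
  assumes R: "R \<in> tr lam n"
  shows "contains_pop n lam (toT n R) 3 (\<lambda>j j'. j = 3 \<and> j' = 2) = occP lam R"
proof
  have l: "length R = n" using R unfolding tr_def by auto
  assume "contains_pop n lam (toT n R) 3 (\<lambda>j j'. j = 3 \<and> j' = 2)"
  then obtain \<sigma> where s: "bij_betw \<sigma> {1..3} {1..3}" "occurs_with n lam (toT n R) 3 \<sigma>"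
      "\<forall>j\<in>{1..3}. \<forall>j'\<in>{1..3}. j = 3 \<and> j' = 2 \<longrightarrow> \<sigma> j < \<sigma> j'"
    unfolding contains_pop_def by blast
  have "\<sigma> 3 < \<sigma> 2" using s(3) by auto
  moreover have "\<sigma> ` {1..3} \<subseteq> {1..3}" using s(1) by (simp add: bij_betw_def)
  ultimately show "occP lam R" using ow_dest[OF R s(2)] l unfolding occP_def by metis
next
  assume "occP lam R"
  then obtain xs where xs: "xs \<in> {[1,3,2],[2,3,1],[3,2,1]}" "occurs_with n lam (toT n R) 3 (sg xs)"
    using occP_intro[OF R] by blast
  have "bij_betw (sg xs) {1..3} {1..3}" using xs(1) bij_sg by auto
  moreover have "sg xs 3 < sg xs 2" using xs(1) by (auto simp: sg3)
  ultimately show "contains_pop n lam (toT n R) 3 (\<lambda>j j'. j = 3 \<and> j' = 2)"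
    unfolding contains_pop_def using xs(2) by (intro exI[of _ "sg xs"]) auto
qed

lemma pop_Q:
  assumes R: "R \<in> tr lam n"
  shows "contains_pop n lam (toT n R) 3 (\<lambda>j j'. j = 2 \<and> j' = 3) = occQ lam R"
proof
  have l: "length R = n" using R unfolding tr_def by auto
  assume "contains_pop n lam (toT n R) 3 (\<lambda>j j'. j = 2 \<and> j' = 3)"
  then obtain \<sigma> where s: "bij_betw \<sigma> {1..3} {1..3}" "occurs_with n lam (toT n R) 3 \<sigma>"
      "\<forall>j\<in>{1..3}. \<forall>j'\<in>{1..3}. j = 2 \<and> j' = 3 \<longrightarrow> \<sigma> j < \<sigma> j'"
    unfolding contains_pop_def by blast
  have "\<sigma> 2 < \<sigma> 3" using s(3) by auto
  moreover have "\<sigma> ` {1..3} \<subseteq> {1..3}" using s(1) by (simp add: bij_betw_def)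
  ultimately show "occQ lam R" using ow_dest[OF R s(2)] l unfolding occQ_def by metis
next
  assume "occQ lam R"
  then obtain xs where xs: "xs \<in> {[1,2,3],[2,1,3],[3,1,2]}" "occurs_with n lam (toT n R) 3 (sg xs)"
    using occQ_intro[OF R] by blast
  have "bij_betw (sg xs) {1..3} {1..3}" using xs(1) bij_sg by auto
  moreover have "sg xs 2 < sg xs 3" using xs(1) by (auto simp: sg3)
  ultimately show "contains_pop n lam (toT n R) 3 (\<lambda>j j'. j = 2 \<and> j' = 3)"
    unfolding contains_pop_def using xs(2) by (intro exI[of _ "sg xs"]) auto
qed

lemma perms_P:
  assumes R: "R \<in> tr lam n"
  shows "(\<forall>\<alpha>\<in>{[1,3,2],[2,3,1],[3,2,1]}. \<not> contains_perm n lam (toT n R) \<alpha>) = (\<not> occP lam R)"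
proof
  have l: "length R = n" using R unfolding tr_def by auto
  assume A: "\<forall>\<alpha>\<in>{[1,3,2],[2,3,1],[3,2,1]}. \<not> contains_perm n lam (toT n R) \<alpha>"
  show "\<not> occP lam R"
  proof
    assume "occP lam R"
    then obtain xs where xs: "xs \<in> {[1,3,2],[2,3,1],[3,2,1]}" "occurs_with n lam (toT n R) 3 (sg xs)"
      using occP_intro[OF R] by blast
    have "length xs = 3" using xs(1) by auto
    then have "contains_perm n lam (toT n R) xs" using cperm_sg xs(2) by simp
    then show False using A xs(1) by blast
  qed
next
  have l: "length R = n" using R unfolding tr_def by auto
  assume N: "\<not> occP lam R"
  show "\<forall>\<alpha>\<in>{[1,3,2],[2,3,1],[3,2,1]}. \<not> contains_perm n lam (toT n R) \<alpha>"
  proof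
    fix \<alpha> :: "nat list" assume a: "\<alpha> \<in> {[1,3,2],[2,3,1],[3,2,1]}"
    show "\<not> contains_perm n lam (toT n R) \<alpha>"
    proof
      assume "contains_perm n lam (toT n R) \<alpha>"
      then have O: "occurs_with n lam (toT n R) 3 (sg \<alpha>)" using cperm_sg a by auto
      have "sg \<alpha> ` {1..3} \<subseteq> {1..3}" using a sg_img by auto
      moreover have "sg \<alpha> 3 < sg \<alpha> 2" using a by (auto simp: sg3)
      ultimately have "occP lam R" using ow_dest[OF R O] l unfolding occP_def by metis
      then show False using N by simp
    qed
  qed
qed

lemma perms_Q:
  assumes R: "R \<in> tr lam n"
  shows "(\<forall>\<alpha>\<in>{[1,2,3],[2,1,3],[3,1,2]}. \<not> contains_perm n lam (toT n R) \<alpha>) = (\<not> occQ lam R)"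
proof
  have l: "length R = n" using R unfolding tr_def by auto
  assume A: "\<forall>\<alpha>\<in>{[1,2,3],[2,1,3],[3,1,2]}. \<not> contains_perm n lam (toT n R) \<alpha>"
  show "\<not> occQ lam R"
  proof
    assume "occQ lam R"
    then obtain xs where xs: "xs \<in> {[1,2,3],[2,1,3],[3,1,2]}" "occurs_with n lam (toT n R) 3 (sg xs)"
      using occQ_intro[OF R] by blast
    have "length xs = 3" using xs(1) by auto
    then have "contains_perm n lam (toT n R) xs" using cperm_sg xs(2) by simp
    then show False using A xs(1) by blast
  qed
next
  have l: "length R = n" using R unfolding tr_def by auto
  assume N: "\<not> occQ lam R"
  show "\<forall>\<alpha>\<in>{[1,2,3],[2,1,3],[3,1,2]}. \<not> contains_perm n lam (toT n R) \<alpha>"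
  proof
    fix \<alpha> :: "nat list" assume a: "\<alpha> \<in> {[1,2,3],[2,1,3],[3,1,2]}"
    show "\<not> contains_perm n lam (toT n R) \<alpha>"
    proof
      assume "contains_perm n lam (toT n R) \<alpha>"
      then have O: "occurs_with n lam (toT n R) 3 (sg \<alpha>)" using cperm_sg a by auto
      have "sg \<alpha> ` {1..3} \<subseteq> {1..3}" using a sg_img by auto
      moreover have "sg \<alpha> 2 < sg \<alpha> 3" using a by (auto simp: sg3)
      ultimately have "occQ lam R" using ow_dest[OF R O] l unfolding occQ_def by metis
      then show False using N by simp
    qed
  qed
qed

theorem theorem1p6:
  shows "shape_wilf_pop 3 (\<lambda>j j'. j = 3 \<and> j' = 2) (\<lambda>j j'. j = 2 \<and> j' = 3)
       \<and> shape_wilf_perms {[1,3,2], [2,3,1], [3,2,1]} {[1,2,3], [2,1,3], [3,1,2]}"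
proof
  show "shape_wilf_pop 3 (\<lambda>j j'. j = 3 \<and> j' = 2) (\<lambda>j j'. j = 2 \<and> j' = 3)"
    unfolding shape_wilf_pop_def
  proof (intro allI impI)
    fix n lam assume Fe: "ferrers n lam"
    have "num_avoid_pop n lam 3 (\<lambda>j j'. j = 3 \<and> j' = 2) = card {R\<in>tr lam n. \<not> occP lam R}"
      unfolding num_avoid_pop_def by (rule transfer_card[OF Fe]) (simp add: pop_P)
    also have "\<dots> = card {R\<in>tr lam n. \<not> occQ lam R}" by (rule equal_counts[OF Fe])
    also have "\<dots> = num_avoid_pop n lam 3 (\<lambda>j j'. j = 2 \<and> j' = 3)"
      unfolding num_avoid_pop_def by (rule transfer_card[OF Fe, symmetric]) (simp add: pop_Q)
    finally show "num_avoid_pop n lam 3 (\<lambda>j j'. j = 3 \<and> j' = 2) = num_avoid_pop n lam 3 (\<lambda>j j'. j = 2 \<and> j' = 3)" .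
  qed
  show "shape_wilf_perms {[1,3,2], [2,3,1], [3,2,1]} {[1,2,3], [2,1,3], [3,1,2]}"
    unfolding shape_wilf_perms_def
  proof (intro allI impI)
    fix n lam assume Fe: "ferrers n lam"
    have "num_avoid_perms n lam {[1,3,2], [2,3,1], [3,2,1]} = card {R\<in>tr lam n. \<not> occP lam R}"
      unfolding num_avoid_perms_def by (rule transfer_card[OF Fe]) (rule perms_P)
    also have "\<dots> = card {R\<in>tr lam n. \<not> occQ lam R}" by (rule equal_counts[OF Fe])
    also have "\<dots> = num_avoid_perms n lam {[1,2,3], [2,1,3], [3,1,2]}"
      unfolding num_avoid_perms_def by (rule transfer_card[OF Fe, symmetric]) (rule perms_Q)
    finally show "num_avoid_perms n lam {[1,3,2], [2,3,1], [3,2,1]} = num_avoid_perms n lam {[1,2,3], [2,1,3], [3,1,2]}" .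
  qed
qed

end
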